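(* Assume Assumption 1, Assumption 2 and the null hypothesis $H_0:\ T_i(1)=T_i(0)$ for all $i$, and condition on $\boldsymbol{T}(1),\boldsymbol{T}(0)$. Then $\mathbb{E}\{L\mid\boldsymbol{T}(1),\boldsymbol{T}(0)\}=0$ and $$\mathrm{Var}\{L\mid\boldsymbol{T}(1),\boldsymbol{T}(0)\}=\mathbb{E}\{U\mid\boldsymbol{T}(1),\boldsymbol{T}(0)\}=\sum_{k=1}^K\mathbb{E}\{V_k\mid\boldsymbol{T}(1),\boldsymbol{T}(0)\}=\sum_{k=1}^K\frac{n_k^2}{n_k-1}h_k(1-h_k)\phi_k(1-\phi_k)\Big\{g_k-\frac{1-(1-g_k)^{n_k}}{n_k}\Big\}.$$
   Context: There are $n$ units. Unit $i$ has potential event times $T_i(1),T_i(0)\ge 0$, potential censoring times $C_i(1),C_i(0)\in[0,\infty]$, and treatment indicator $Z_i\in\{0,1\}$; bold letters denote $n$-vectors. Assumption 1: conditional on $\boldsymbol{T}(1),\boldsymbol{T}(0),\boldsymbol{C}(1),\boldsymbol{C}(0)$, the $Z_i$ are i.i.d. Bernoulli$(p_1)$, $p_1=1-p_0\in(0,1)$. Assumption 2: $(\boldsymbol{C}(1),\boldsymbol{C}(0))$ is independent of $(\boldsymbol{T}(1),\boldsymbol{T}(0))$ and the pairs $(C_i(1),C_i(0))$ are i.i.d. across $i$. Let $G_z(c)=\Pr(C_i(z)\ge c)$, $G(t)=p_1G_1(t)+p_0G_0(t)$. Realized: $T_i=Z_iT_i(1)+(1-Z_i)T_i(0)$, $C_i=Z_iC_i(1)+(1-Z_i)C_i(0)$,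 $W_i=\min\{T_i,C_i\}$, $\Delta_i=\mathbb{1}(T_i\le C_i)$. Let $t_1<\dots<t_K$ be the distinct values of $\{T_i(0)\}$; $d_k=\#\{i:T_i(0)=t_k\}$, $n_k=\#\{i:T_i(0)\ge t_k\}$, $h_k=d_k/n_k$, $g_k=G(t_k)$, $\phi_k=p_1G_1(t_k)/G(t_k)$. For $1\le k\le K$: $N_{1k}=\sum_iZ_i\mathbb{1}(W_i\ge t_k)$, $N_{0k}=\sum_i(1-Z_i)\mathbb{1}(W_i\ge t_k)$, $N_k=N_{1k}+N_{0k}$, $D_{1k}=\sum_iZ_i\Delta_i\mathbb{1}(W_i=t_k)$, $D_k=\sum_i\Delta_i\mathbb{1}(W_i=t_k)$, $M_k=D_kN_{1k}/N_k$, $V_k=D_k(N_k-D_k)N_{1k}N_{0k}/\{N_k^2(N_k-1)\}$, with the convention $0/0:=0$. $L=\sum_{k=1}^K(D_{1k}-M_k)$, $U=\sum_{k=1}^KV_k$. *)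

theory Defs
  imports "HOL-Probability.Probability"
begin

text \<open>Potential event times t1 i = T_i(1), t0 i = T_i(0) (fixed, i.e.
  conditioned on), treatment indicators z i = Z_i, potential censoring times
  c1 i = C_i(1), c0 i = C_i(0) in [0, infinity] (type ennreal).\<close>

definition realT :: "(nat \<Rightarrow> real) \<Rightarrow> (nat \<Rightarrow> real) \<Rightarrow> (nat \<Rightarrow> bool) \<Rightarrow> nat \<Rightarrow> real" where
  "realT t1 t0 z i = (if z i then t1 i else t0 i)"

definition realC :: "(nat \<Rightarrow> ennreal) \<Rightarrow> (nat \<Rightarrow> ennreal) \<Rightarrow> (nat \<Rightarrow> bool) \<Rightarrow> nat \<Rightarrow> ennreal" where
  "realC c1 c0 z i = (if z i then c1 i else c0 i)"

definition obsW :: "(nat \<Rightarrow> real) \<Rightarrow> (nat \<Rightarrow> real) \<Rightarrow> (nat \<Rightarrow> ennreal) \<Rightarrow> (nat \<Rightarrow> ennreal)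
    \<Rightarrow> (nat \<Rightarrow> bool) \<Rightarrow> nat \<Rightarrow> ennreal" where
  "obsW t1 t0 c1 c0 z i = min (ennreal (realT t1 t0 z i)) (realC c1 c0 z i)"

definition obsDelta :: "(nat \<Rightarrow> real) \<Rightarrow> (nat \<Rightarrow> real) \<Rightarrow> (nat \<Rightarrow> ennreal) \<Rightarrow> (nat \<Rightarrow> ennreal)
    \<Rightarrow> (nat \<Rightarrow> bool) \<Rightarrow> nat \<Rightarrow> bool" where
  "obsDelta t1 t0 c1 c0 z i = (ennreal (realT t1 t0 z i) \<le> realC c1 c0 z i)"

text \<open>Risk-set and event counts at time s (s ranges over the distinct values t_k of T(0)).\<close>

definition N1 :: "nat \<Rightarrow> (nat \<Rightarrow> real) \<Rightarrow> (nat \<Rightarrow> real) \<Rightarrow> (nat \<Rightarrow> ennreal) \<Rightarrow> (nat \<Rightarrow> ennreal)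
    \<Rightarrow> (nat \<Rightarrow> bool) \<Rightarrow> real \<Rightarrow> real" where
  "N1 n t1 t0 c1 c0 z s = real (card {i \<in> {..<n}. z i \<and> ennreal s \<le> obsW t1 t0 c1 c0 z i})"

definition N0 :: "nat \<Rightarrow> (nat \<Rightarrow> real) \<Rightarrow> (nat \<Rightarrow> real) \<Rightarrow> (nat \<Rightarrow> ennreal) \<Rightarrow> (nat \<Rightarrow> ennreal)
    \<Rightarrow> (nat \<Rightarrow> bool) \<Rightarrow> real \<Rightarrow> real" where
  "N0 n t1 t0 c1 c0 z s = real (card {i \<in> {..<n}. \<not> z i \<and> ennreal s \<le> obsW t1 t0 c1 c0 z i})"

definition Ntot :: "nat \<Rightarrow> (nat \<Rightarrow> real) \<Rightarrow> (nat \<Rightarrow> real) \<Rightarrow> (nat \<Rightarrow> ennreal) \<Rightarrow> (nat \<Rightarrow> ennreal)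
    \<Rightarrow> (nat \<Rightarrow> bool) \<Rightarrow> real \<Rightarrow> real" where
  "Ntot n t1 t0 c1 c0 z s = N1 n t1 t0 c1 c0 z s + N0 n t1 t0 c1 c0 z s"

definition D1 :: "nat \<Rightarrow> (nat \<Rightarrow> real) \<Rightarrow> (nat \<Rightarrow> real) \<Rightarrow> (nat \<Rightarrow> ennreal) \<Rightarrow> (nat \<Rightarrow> ennreal)
    \<Rightarrow> (nat \<Rightarrow> bool) \<Rightarrow> real \<Rightarrow> real" where
  "D1 n t1 t0 c1 c0 z s = real (card {i \<in> {..<n}. z i \<and> obsDelta t1 t0 c1 c0 z i
      \<and> obsW t1 t0 c1 c0 z i = ennreal s})"

definition Dtot :: "nat \<Rightarrow> (nat \<Rightarrow> real) \<Rightarrow> (nat \<Rightarrow> real) \<Rightarrow> (nat \<Rightarrow> ennreal) \<Rightarrow> (nat \<Rightarrow> ennreal)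
    \<Rightarrow> (nat \<Rightarrow> bool) \<Rightarrow> real \<Rightarrow> real" where
  "Dtot n t1 t0 c1 c0 z s = real (card {i \<in> {..<n}. obsDelta t1 t0 c1 c0 z i
      \<and> obsW t1 t0 c1 c0 z i = ennreal s})"

text \<open>M_k and V_k; real division by zero is zero in Isabelle, matching the convention 0/0 := 0.\<close>

definition Mk :: "nat \<Rightarrow> (nat \<Rightarrow> real) \<Rightarrow> (nat \<Rightarrow> real) \<Rightarrow> (nat \<Rightarrow> ennreal) \<Rightarrow> (nat \<Rightarrow> ennreal)
    \<Rightarrow> (nat \<Rightarrow> bool) \<Rightarrow> real \<Rightarrow> real" where
  "Mk n t1 t0 c1 c0 z s = Dtot n t1 t0 c1 c0 z s * N1 n t1 t0 c1 c0 z s / Ntot n t1 t0 c1 c0 z s"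

definition Vk :: "nat \<Rightarrow> (nat \<Rightarrow> real) \<Rightarrow> (nat \<Rightarrow> real) \<Rightarrow> (nat \<Rightarrow> ennreal) \<Rightarrow> (nat \<Rightarrow> ennreal)
    \<Rightarrow> (nat \<Rightarrow> bool) \<Rightarrow> real \<Rightarrow> real" where
  "Vk n t1 t0 c1 c0 z s =
     (let D = Dtot n t1 t0 c1 c0 z s; N = Ntot n t1 t0 c1 c0 z s;
          A = N1 n t1 t0 c1 c0 z s; B = N0 n t1 t0 c1 c0 z s
      in D * (N - D) * A * B / (N ^ 2 * (N - 1)))"

definition times0 :: "nat \<Rightarrow> (nat \<Rightarrow> real) \<Rightarrow> real set" where
  "times0 n t0 = t0 ` {..<n}"

definition logrankL :: "nat \<Rightarrow> (nat \<Rightarrow> real) \<Rightarrow> (nat \<Rightarrow> real) \<Rightarrow> (nat \<Rightarrow> ennreal) \<Rightarrow> (nat \<Rightarrow> ennreal)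
    \<Rightarrow> (nat \<Rightarrow> bool) \<Rightarrow> real" where
  "logrankL n t1 t0 c1 c0 z =
     (\<Sum>s\<in>times0 n t0. D1 n t1 t0 c1 c0 z s - Mk n t1 t0 c1 c0 z s)"

definition logrankU :: "nat \<Rightarrow> (nat \<Rightarrow> real) \<Rightarrow> (nat \<Rightarrow> real) \<Rightarrow> (nat \<Rightarrow> ennreal) \<Rightarrow> (nat \<Rightarrow> ennreal)
    \<Rightarrow> (nat \<Rightarrow> bool) \<Rightarrow> real" where
  "logrankU n t1 t0 c1 c0 z = (\<Sum>s\<in>times0 n t0. Vk n t1 t0 c1 c0 z s)"

definition dk :: "nat \<Rightarrow> (nat \<Rightarrow> real) \<Rightarrow> real \<Rightarrow> real" where
  "dk n t0 s = real (card {i \<in> {..<n}. t0 i = s})"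

definition nk :: "nat \<Rightarrow> (nat \<Rightarrow> real) \<Rightarrow> real \<Rightarrow> nat" where
  "nk n t0 s = card {i \<in> {..<n}. s \<le> t0 i}"

definition hk :: "nat \<Rightarrow> (nat \<Rightarrow> real) \<Rightarrow> real \<Rightarrow> real" where
  "hk n t0 s = dk n t0 s / real (nk n t0 s)"

text \<open>Censoring survivor functions, from the common law Q of the pair (C_i(1), C_i(0)).\<close>

definition Gsurv1 :: "(ennreal \<times> ennreal) measure \<Rightarrow> real \<Rightarrow> real" where
  "Gsurv1 Q c = measure Q {x \<in> space Q. ennreal c \<le> fst x}"

definition Gsurv0 :: "(ennreal \<times> ennreal) measure \<Rightarrow> real \<Rightarrow> real" where
  "Gsurv0 Q c = measure Q {x \<in> space Q. ennreal c \<le> snd x}"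

definition Gmix :: "real \<Rightarrow> (ennreal \<times> ennreal) measure \<Rightarrow> real \<Rightarrow> real" where
  "Gmix p1 Q c = p1 * Gsurv1 Q c + (1 - p1) * Gsurv0 Q c"

definition phik :: "real \<Rightarrow> (ennreal \<times> ennreal) measure \<Rightarrow> real \<Rightarrow> real" where
  "phik p1 Q c = p1 * Gsurv1 Q c / Gmix p1 Q c"

end

theory Submission
  imports Defs
begin

lemma perm_inv:
  fixes \<nu> :: "'b measure" and F :: "(nat \<Rightarrow> 'b) \<Rightarrow> real"
  assumes nu: "prob_space \<nu>" and pi: "\<pi> permutes I"
    and F: "F \<in> borel_measurable (PiM I (\<lambda>_. \<nu>))"
  shows "(\<integral>x. F (\<lambda>u\<in>I. x (\<pi> u)) \<partial>PiM I (\<lambda>_. \<nu>)) = (\<integral>x. F x \<partial>PiM I (\<lambda>_. \<nu>))"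
proof -
  have inj: "inj_on \<pi> I" by (rule permutes_inj_on[OF pi])
  have into: "\<pi> \<in> I \<rightarrow> I" using permutes_in_image[OF pi] by auto
  have T: "(\<lambda>x. \<lambda>u\<in>I. x (\<pi> u)) \<in> measurable (PiM I (\<lambda>_. \<nu>)) (PiM I (\<lambda>_. \<nu>))"
    using into by (intro measurable_restrict) (auto intro: measurable_component_singleton)
  have "distr (PiM I (\<lambda>_. \<nu>)) (PiM I (\<lambda>_. \<nu>)) (\<lambda>x. \<lambda>u\<in>I. x (\<pi> u)) = PiM I (\<lambda>_. \<nu>)"
    using distr_PiM_reindex[of I "\<lambda>_. \<nu>" \<pi> I] nu inj into by simp
  then have "(\<integral>x. F x \<partial>PiM I (\<lambda>_. \<nu>)) = integral\<^sup>L (distr (PiM I (\<lambda>_. \<nu>)) (PiM I (\<lambda>_. \<nu>)) (\<lambda>x. \<lambda>u\<in>I. x (\<pi> u))) F"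
    by simp
  also have "\<dots> = (\<integral>x. F (\<lambda>u\<in>I. x (\<pi> u)) \<partial>PiM I (\<lambda>_. \<nu>))"
    by (rule integral_distr[OF T F])
  finally show ?thesis by simp
qed
lemma indep1:
  fixes \<nu> :: "'b measure" and H :: "(nat \<Rightarrow> 'b) \<Rightarrow> real" and f :: "'b \<Rightarrow> real"
  assumes nu: "prob_space \<nu>" and I: "finite I" "j \<in> I"
    and iH: "integrable (PiM I (\<lambda>_. \<nu>)) H"
    and ifH: "integrable (PiM I (\<lambda>_. \<nu>)) (\<lambda>x. f (x j) * H x)"
    and Hj: "\<And>x y. x \<in> space (PiM I (\<lambda>_. \<nu>)) \<Longrightarrow> y \<in> space \<nu> \<Longrightarrow> H (x(j:=y)) = H x"
  shows "(\<integral>x. f (x j) * H x \<partial>PiM I (\<lambda>_. \<nu>)) = (\<integral>y. f y \<partial>\<nu>) * (\<integral>x. H x \<partial>PiM I (\<lambda>_. \<nu>))"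
proof -
  interpret nu: prob_space \<nu> by (rule nu)
  interpret ps: product_prob_space "\<lambda>_. \<nu>" by unfold_locales
  obtain y0 where y0: "y0 \<in> space \<nu>" using nu.not_empty by auto
  define J where "J = I - {j}"
  have IJ: "I = insert j J" "j \<notin> J" "finite J" using I by (auto simp: J_def)
  define Hc where "Hc x = H (x(j:=y0))" for x
  have H2: "H (x(j:=y)) = Hc x" if x: "x \<in> space (PiM J (\<lambda>_. \<nu>))" and y: "y \<in> space \<nu>" for x y
  proof -
    have "x(j:=y0) \<in> space (PiM I (\<lambda>_. \<nu>))" using x y0 IJ
      by (auto simp: space_PiM PiE_def extensional_def Pi_def)
    from Hj[OF this y] show ?thesis by (simp add: Hc_def)
  qed
  have e1: "(\<integral>x. f (x j) * H x \<partial>PiM I (\<lambda>_. \<nu>)) =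
     (\<integral>x. (\<integral>y. f ((x(j:=y)) j) * H (x(j:=y)) \<partial>\<nu>) \<partial>PiM J (\<lambda>_. \<nu>))"
    unfolding IJ(1) by (rule ps.product_integral_insert[OF IJ(3,2)]) (use ifH IJ in simp)
  also have "\<dots> = (\<integral>x. (\<integral>y. f y \<partial>\<nu>) * Hc x \<partial>PiM J (\<lambda>_. \<nu>))"
  proof (rule Bochner_Integration.integral_cong[OF refl])
    fix x assume x: "x \<in> space (PiM J (\<lambda>_. \<nu>))"
    have "(\<integral>y. f ((x(j:=y)) j) * H (x(j:=y)) \<partial>\<nu>) = (\<integral>y. f y * Hc x \<partial>\<nu>)"
      by (rule Bochner_Integration.integral_cong[OF refl]) (simp add: H2[OF x])
    then show "(\<integral>y. f ((x(j:=y)) j) * H (x(j:=y)) \<partial>\<nu>) = (\<integral>y. f y \<partial>\<nu>) * Hc x" by simp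
  qed
  also have "\<dots> = (\<integral>y. f y \<partial>\<nu>) * (\<integral>x. Hc x \<partial>PiM J (\<lambda>_. \<nu>))" by simp
  finally have e1: "(\<integral>x. f (x j) * H x \<partial>PiM I (\<lambda>_. \<nu>)) = (\<integral>y. f y \<partial>\<nu>) * (\<integral>x. Hc x \<partial>PiM J (\<lambda>_. \<nu>))" .
  have e2: "(\<integral>x. Hc x \<partial>PiM J (\<lambda>_. \<nu>)) = (\<integral>x. (\<integral>y. H (x(j:=y)) \<partial>\<nu>) \<partial>PiM J (\<lambda>_. \<nu>))"
  proof (rule Bochner_Integration.integral_cong[OF refl])
    fix x assume x: "x \<in> space (PiM J (\<lambda>_. \<nu>))"
    have "(\<integral>y. H (x(j:=y)) \<partial>\<nu>) = (\<integral>y. Hc x \<partial>\<nu>)"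
      by (rule Bochner_Integration.integral_cong[OF refl]) (simp add: H2[OF x])
    then show "Hc x = (\<integral>y. H (x(j:=y)) \<partial>\<nu>)" by (simp add: nu.prob_space)
  qed
  have iH': "integrable (PiM (insert j J) (\<lambda>_. \<nu>)) H" using iH IJ(1) by simp
  have e3: "(\<integral>x. H x \<partial>PiM I (\<lambda>_. \<nu>)) = (\<integral>x. (\<integral>y. H (x(j:=y)) \<partial>\<nu>) \<partial>PiM J (\<lambda>_. \<nu>))"
    unfolding IJ(1) by (rule ps.product_integral_insert[OF IJ(3,2) iH'])
  show ?thesis using e1 e2 e3 by simp
qed

definition permv :: "nat set \<Rightarrow> (nat \<Rightarrow> nat) \<Rightarrow> (nat \<Rightarrow> 'b) \<Rightarrow> nat \<Rightarrow> 'b" where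
  "permv I \<pi> x = (\<lambda>u\<in>I. x (\<pi> u))"

lemma permv_apply: "u \<in> I \<Longrightarrow> permv I \<pi> x u = x (\<pi> u)"
  by (simp add: permv_def)

lemma sym1:
  fixes \<nu> :: "'b measure" and F :: "nat \<Rightarrow> (nat \<Rightarrow> 'b) \<Rightarrow> real"
  assumes nu: "prob_space \<nu>" and PI: "P \<subseteq> I" and ij: "i \<in> P" "j \<in> P"
    and Fm: "F i \<in> borel_measurable (PiM I (\<lambda>_. \<nu>))"
    and Fp: "\<And>\<pi> x. \<pi> permutes P \<Longrightarrow> x \<in> space (PiM I (\<lambda>_. \<nu>)) \<Longrightarrow> F i (permv I \<pi> x) = F (\<pi> i) x"
  shows "(\<integral>x. F i x \<partial>PiM I (\<lambda>_. \<nu>)) = (\<integral>x. F j x \<partial>PiM I (\<lambda>_. \<nu>))"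
proof -
  have tP: "Transposition.transpose i j permutes P" by (rule permutes_swap_id[OF ij])
  have tI: "Transposition.transpose i j permutes I" by (rule permutes_subset[OF tP PI])
  have "(\<integral>x. F i x \<partial>PiM I (\<lambda>_. \<nu>)) = (\<integral>x. F i (permv I (Transposition.transpose i j) x) \<partial>PiM I (\<lambda>_. \<nu>))"
    using perm_inv[OF nu tI Fm] by (simp add: permv_def)
  also have "\<dots> = (\<integral>x. F j x \<partial>PiM I (\<lambda>_. \<nu>))"
    by (rule Bochner_Integration.integral_cong[OF refl]) (simp add: Fp[OF tP])
  finally show ?thesis .
qed

lemma sym2:
  fixes \<nu> :: "'b measure" and F :: "nat \<Rightarrow> nat \<Rightarrow> (nat \<Rightarrow> 'b) \<Rightarrow> real"
  assumes nu: "prob_space \<nu>" and PI: "P \<subseteq> I" and ij: "i \<in> P" "i' \<in> P" "j \<in> P" "j' \<in> P"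
    and d: "i \<noteq> i'" "j \<noteq> j'"
    and Fm: "F i i' \<in> borel_measurable (PiM I (\<lambda>_. \<nu>))"
    and Fp: "\<And>\<pi> x. \<pi> permutes P \<Longrightarrow> x \<in> space (PiM I (\<lambda>_. \<nu>)) \<Longrightarrow> F i i' (permv I \<pi> x) = F (\<pi> i) (\<pi> i') x"
  shows "(\<integral>x. F i i' x \<partial>PiM I (\<lambda>_. \<nu>)) = (\<integral>x. F j j' x \<partial>PiM I (\<lambda>_. \<nu>))"
proof -
  define \<pi> where "\<pi> = Transposition.transpose j' (Transposition.transpose i j i') \<circ> Transposition.transpose i j"
  have t1: "Transposition.transpose i j i' \<in> P" using ij by (auto simp: Transposition.transpose_def)
  have tP: "\<pi> permutes P" unfolding \<pi>_def
    by (rule permutes_compose[OF permutes_swap_id[OF ij(1,3)] permutes_swap_id[OF ij(4) t1]])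
  have tI: "\<pi> permutes I" by (rule permutes_subset[OF tP PI])
  have pi1: "\<pi> i = j" "\<pi> i' = j'" using d by (auto simp: \<pi>_def Transposition.transpose_def)
  have "(\<integral>x. F i i' x \<partial>PiM I (\<lambda>_. \<nu>)) = (\<integral>x. F i i' (permv I \<pi> x) \<partial>PiM I (\<lambda>_. \<nu>))"
    using perm_inv[OF nu tI Fm] by (simp add: permv_def)
  also have "\<dots> = (\<integral>x. F j j' x \<partial>PiM I (\<lambda>_. \<nu>))"
    by (rule Bochner_Integration.integral_cong[OF refl]) (simp add: Fp[OF tP] pi1)
  finally show ?thesis .
qed

lemma sym_zero:
  fixes \<nu> :: "'b measure" and F :: "nat \<Rightarrow> (nat \<Rightarrow> 'b) \<Rightarrow> real"
  assumes fin: "finite P" and i: "i \<in> P"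
    and eq: "\<And>j. j \<in> P \<Longrightarrow> (\<integral>x. F j x \<partial>\<Omega>) = (\<integral>x. F i x \<partial>\<Omega>)"
    and int: "\<And>j. j \<in> P \<Longrightarrow> integrable \<Omega> (F j)"
    and z: "\<And>x. x \<in> space \<Omega> \<Longrightarrow> (\<Sum>j\<in>P. F j x) = 0"
  shows "(\<integral>x. F i x \<partial>\<Omega>) = 0"
proof -
  have "real (card P) * (\<integral>x. F i x \<partial>\<Omega>) = (\<Sum>j\<in>P. \<integral>x. F j x \<partial>\<Omega>)" using eq by simp
  also have "\<dots> = (\<integral>x. (\<Sum>j\<in>P. F j x) \<partial>\<Omega>)" by (rule Bochner_Integration.integral_sum[symmetric]) (rule int)
  also have "\<dots> = 0" by (simp add: z cong: Bochner_Integration.integral_cong)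
  finally show ?thesis using fin i by auto
qed

definition cc :: "bool \<times> ennreal \<times> ennreal \<Rightarrow> ennreal" where
  "cc b = (if fst b then fst (snd b) else snd (snd b))"
definition rho :: "real \<Rightarrow> bool \<times> ennreal \<times> ennreal \<Rightarrow> real" where
  "rho s b = of_bool (ennreal s \<le> cc b)"
definition zeta :: "bool \<times> ennreal \<times> ennreal \<Rightarrow> real" where
  "zeta b = of_bool (fst b)"

lemma meas_fst_borel: "fst \<in> borel_measurable (borel :: (ennreal \<times> ennreal) measure)"
  by (subst borel_prod[symmetric]) (rule measurable_fst)
lemma meas_snd_borel: "snd \<in> borel_measurable (borel :: (ennreal \<times> ennreal) measure)"
  by (subst borel_prod[symmetric]) (rule measurable_snd)

lemma meas_cc: "cc \<in> borel_measurable (count_space UNIV \<Otimes>\<^sub>M (borel :: (ennreal \<times> ennreal) measure))"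
proof -
  have s: "snd \<in> measurable (count_space UNIV \<Otimes>\<^sub>M (borel :: (ennreal \<times> ennreal) measure)) borel"
    by (rule measurable_snd)
  have f: "fst \<in> measurable (count_space UNIV \<Otimes>\<^sub>M (borel :: (ennreal \<times> ennreal) measure)) (count_space UNIV)"
    by (rule measurable_fst)
  have p: "{b \<in> space (count_space UNIV \<Otimes>\<^sub>M (borel :: (ennreal \<times> ennreal) measure)). fst b} \<in> sets (count_space UNIV \<Otimes>\<^sub>M (borel :: (ennreal \<times> ennreal) measure))"
    using measurable_sets[OF f, of "{True}"] by (simp add: vimage_def Int_def)
  have a: "(\<lambda>b. fst (snd b)) \<in> borel_measurable (count_space UNIV \<Otimes>\<^sub>M (borel :: (ennreal \<times> ennreal) measure))"
    using measurable_comp[OF s meas_fst_borel] by (simp add: comp_def)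
  have b: "(\<lambda>b. snd (snd b)) \<in> borel_measurable (count_space UNIV \<Otimes>\<^sub>M (borel :: (ennreal \<times> ennreal) measure))"
    using measurable_comp[OF s meas_snd_borel] by (simp add: comp_def)
  show ?thesis unfolding cc_def by (rule measurable_If[OF a b p])
qed

lemma meas_rho: "rho s \<in> borel_measurable (count_space UNIV \<Otimes>\<^sub>M (borel :: (ennreal \<times> ennreal) measure))"
  unfolding rho_def using meas_cc by measurable

lemma meas_zeta: "zeta \<in> borel_measurable (count_space UNIV \<Otimes>\<^sub>M (borel :: (ennreal \<times> ennreal) measure))"
  unfolding zeta_def by measurable

definition PP :: "nat \<Rightarrow> (nat \<Rightarrow> real) \<Rightarrow> real \<Rightarrow> nat set" where
  "PP n t0 s = {u \<in> {..<n}. s \<le> t0 u}"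
definition AA :: "nat \<Rightarrow> (nat \<Rightarrow> real) \<Rightarrow> real \<Rightarrow> nat set" where
  "AA n t0 s = {u \<in> {..<n}. t0 u = s}"
definition NN where "NN n t0 s x = (\<Sum>u\<in>PP n t0 s. rho s (x u))"
definition SS where "SS n t0 s x = (\<Sum>u\<in>PP n t0 s. rho s (x u) * zeta (x u))"
definition wt where "wt n t0 s x u = rho s (x u) * (zeta (x u) - SS n t0 s x / NN n t0 s x)"
definition XX where "XX n t0 s x = (\<Sum>u\<in>AA n t0 s. wt n t0 s x u)"
definition DD where "DD n t0 s x = (\<Sum>u\<in>AA n t0 s. rho s (x u))"
definition hh where "hh n t0 s x = SS n t0 s x * (NN n t0 s x - SS n t0 s x) / ((NN n t0 s x)\<^sup>2 * (NN n t0 s x - 1))"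
definition VV where "VV n t0 s x = DD n t0 s x * (NN n t0 s x - DD n t0 s x) * SS n t0 s x * (NN n t0 s x - SS n t0 s x) / ((NN n t0 s x)\<^sup>2 * (NN n t0 s x - 1))"
definition WW where "WW n t0 s x = SS n t0 s x * (NN n t0 s x - SS n t0 s x) / NN n t0 s x"

lemma fin_PP[simp]: "finite (PP n t0 s)" by (simp add: PP_def)
lemma fin_AA[simp]: "finite (AA n t0 s)" by (simp add: AA_def)
lemma AA_PP: "AA n t0 s \<subseteq> PP n t0 s" by (auto simp: AA_def PP_def)
lemma PP_sub: "PP n t0 s \<subseteq> {..<n}" by (auto simp: PP_def)

lemma rho01: "rho s b = 0 \<or> rho s b = 1" by (simp add: rho_def)
lemma zeta01: "zeta b = 0 \<or> zeta b = 1" by (simp add: zeta_def)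
lemma rho_sq[simp]: "rho s b * rho s b = rho s b" by (simp add: rho_def)
lemma zeta_sq[simp]: "zeta b * zeta b = zeta b" by (simp add: zeta_def)

lemma NS_nat: "\<exists>a b. NN n t0 s x = real a \<and> SS n t0 s x = real b \<and> b \<le> a \<and> a \<le> card (PP n t0 s)"
proof -
  let ?P = "PP n t0 s"
  have N: "NN n t0 s x = real (card (?P \<inter> {u. ennreal s \<le> cc (x u)}))"
    by (simp add: NN_def rho_def)
  have S: "SS n t0 s x = real (card (?P \<inter> {u. ennreal s \<le> cc (x u) \<and> fst (x u)}))"
    by (simp add: SS_def rho_def zeta_def of_bool_conj[symmetric] del: of_bool_conj)
  have le: "card (?P \<inter> {u. ennreal s \<le> cc (x u) \<and> fst (x u)}) \<le> card (?P \<inter> {u. ennreal s \<le> cc (x u)})"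
    by (rule card_mono) auto
  have le2: "card (?P \<inter> {u. ennreal s \<le> cc (x u)}) \<le> card ?P"
    by (rule card_mono) auto
  show ?thesis using N S le le2 by blast
qed

lemma sq_split:
  fixes f g :: "nat \<Rightarrow> real"
  assumes "finite P"
  shows "(\<Sum>u\<in>P. f u) * (\<Sum>v\<in>P. g v) = (\<Sum>u\<in>P. f u * g u) + (\<Sum>u\<in>P. \<Sum>v\<in>P-{u}. f u * g v)"
proof -
  have "(\<Sum>u\<in>P. f u) * (\<Sum>v\<in>P. g v) = (\<Sum>u\<in>P. \<Sum>v\<in>P. f u * g v)" by (rule sum_product)
  also have "\<dots> = (\<Sum>u\<in>P. f u * g u + (\<Sum>v\<in>P-{u}. f u * g v))"
    by (rule sum.cong[OF refl]) (simp add: sum.remove[OF assms])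
  finally show ?thesis by (simp add: sum.distrib)
qed

context fixes n :: nat and t0 :: "nat \<Rightarrow> real" and s :: real and x :: "nat \<Rightarrow> bool \<times> ennreal \<times> ennreal" begin

abbreviation "xN \<equiv> NN n t0 s x"
abbreviation "xS \<equiv> SS n t0 s x"
abbreviation "xP \<equiv> PP n t0 s"
abbreviation "xA \<equiv> AA n t0 s"

lemma N_nonneg: "0 \<le> xN" using NS_nat[of n t0 s x] by auto

lemma p1: "(\<Sum>u\<in>xP. wt n t0 s x u) = 0"
proof -
  have eS: "(\<Sum>u\<in>xP. rho s (x u) * zeta (x u)) = xS" by (simp add: SS_def)
  have eN: "(\<Sum>u\<in>xP. rho s (x u)) = xN" by (simp add: NN_def)
  have "(\<Sum>u\<in>xP. wt n t0 s x u) = (\<Sum>u\<in>xP. rho s (x u) * zeta (x u)) - (\<Sum>u\<in>xP. rho s (x u)) * (xS / xN)"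
  proof -
    have "(\<Sum>u\<in>xP. rho s (x u) * (xS / xN)) = (\<Sum>u\<in>xP. rho s (x u)) * (xS / xN)"
      by (rule sum_distrib_right[symmetric])
    then show ?thesis unfolding wt_def by (simp add: right_diff_distrib sum_subtractf)
  qed
  also have "\<dots> = xS - xN * (xS / xN)" by (simp only: eS eN)
  also have "\<dots> = 0" using NS_nat[of n t0 s x] by auto
  finally show ?thesis .
qed

lemma sqaux: "r = 0 \<or> r = 1 \<Longrightarrow> z = 0 \<or> z = (1::real) \<Longrightarrow> (r * (z - q))\<^sup>2 = r * z * (1 - 2 * q) + r * q\<^sup>2"
  by (auto simp: power2_eq_square algebra_simps)

lemma p2: "(\<Sum>u\<in>xP. (wt n t0 s x u)\<^sup>2) = WW n t0 s x"
proof -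
  have eS: "(\<Sum>u\<in>xP. rho s (x u) * zeta (x u)) = xS" by (simp add: SS_def)
  have eN: "(\<Sum>u\<in>xP. rho s (x u)) = xN" by (simp add: NN_def)
  have e: "(wt n t0 s x u)\<^sup>2 = rho s (x u) * zeta (x u) * (1 - 2 * (xS/xN)) + rho s (x u) * (xS/xN)\<^sup>2" for u
    unfolding wt_def by (rule sqaux[OF rho01 zeta01])
  have "(\<Sum>u\<in>xP. (wt n t0 s x u)\<^sup>2) = (\<Sum>u\<in>xP. rho s (x u) * zeta (x u)) * (1 - 2 * (xS/xN)) + (\<Sum>u\<in>xP. rho s (x u)) * (xS/xN)\<^sup>2"
    by (simp only: e sum.distrib sum_distrib_right)
  also have "\<dots> = xS * (1 - 2 * (xS/xN)) + xN * (xS/xN)\<^sup>2" by (simp only: eS eN)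
  also have "\<dots> = WW n t0 s x"
    using NS_nat[of n t0 s x] by (auto simp: WW_def field_simps power2_eq_square)
  finally show ?thesis .
qed

lemma p3: "(\<Sum>u\<in>xP. \<Sum>v\<in>xP-{u}. wt n t0 s x u * wt n t0 s x v) = - WW n t0 s x"
  using sq_split[of xP "wt n t0 s x" "wt n t0 s x"] p1 p2 by (simp add: power2_eq_square)

lemma p4: "(\<Sum>u\<in>xP. \<Sum>v\<in>xP-{u}. rho s (x u) * rho s (x v) * hh n t0 s x) = WW n t0 s x"
proof -
  have "(\<Sum>u\<in>xP. \<Sum>v\<in>xP-{u}. rho s (x u) * rho s (x v) * hh n t0 s x)
      = (\<Sum>u\<in>xP. \<Sum>v\<in>xP-{u}. rho s (x u) * rho s (x v)) * hh n t0 s x"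
    by (simp add: sum_distrib_right)
  also have "(\<Sum>u\<in>xP. \<Sum>v\<in>xP-{u}. rho s (x u) * rho s (x v)) = xN * xN - xN"
    using sq_split[of xP "\<lambda>u. rho s (x u)" "\<lambda>u. rho s (x u)"] by (simp add: NN_def)
  also have "(xN * xN - xN) * hh n t0 s x = WW n t0 s x"
  proof -
    obtain a b where ab: "xN = real a" "xS = real b" "b \<le> a" using NS_nat[of n t0 s x] by blast
    consider "a = 0" | "a = 1" | "a \<ge> 2" by linarith
    then show ?thesis
    proof cases
      case 1 then show ?thesis using ab by (simp add: hh_def WW_def)
    next
      case 2 then have "b = 0 \<or> b = 1" using ab by auto
      then show ?thesis using ab 2 by (auto simp: hh_def WW_def)
    next
      case 3 then have "real a \<noteq> 0" "real a - 1 \<noteq> 0" by auto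
      then show ?thesis using ab by (simp add: hh_def WW_def field_simps power2_eq_square)
    qed
  qed
  finally show ?thesis .
qed

lemma p5: "VV n t0 s x = (\<Sum>u\<in>xA. \<Sum>v\<in>xP-xA. rho s (x u) * rho s (x v) * hh n t0 s x)"
proof -
  have xN: "xN = DD n t0 s x + (\<Sum>v\<in>xP-xA. rho s (x v))"
    unfolding NN_def DD_def using sum.subset_diff[OF AA_PP[of n t0 s], of "\<lambda>u. rho s (x u)"] by simp
  have "DD n t0 s x * (\<Sum>v\<in>xP-xA. rho s (x v)) * hh n t0 s x = (\<Sum>u\<in>xA. \<Sum>v\<in>xP-xA. rho s (x u) * rho s (x v) * hh n t0 s x)"
    unfolding DD_def sum_distrib_right
  proof (rule sum.cong[OF refl])
    fix u show "rho s (x u) * (\<Sum>v\<in>xP-xA. rho s (x v)) * hh n t0 s x = (\<Sum>v\<in>xP-xA. rho s (x u) * rho s (x v) * hh n t0 s x)"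
      by (simp add: sum_distrib_left sum_distrib_right)
  qed
  then have "(\<Sum>u\<in>xA. \<Sum>v\<in>xP-xA. rho s (x u) * rho s (x v) * hh n t0 s x)
     = DD n t0 s x * (\<Sum>v\<in>xP-xA. rho s (x v)) * hh n t0 s x" by simp
  also have "\<dots> = VV n t0 s x"
    by (simp add: xN VV_def hh_def)
  finally show ?thesis by simp
qed

lemma p6: "(XX n t0 s x)\<^sup>2 = (\<Sum>u\<in>xA. (wt n t0 s x u)\<^sup>2) + (\<Sum>u\<in>xA. \<Sum>v\<in>xA-{u}. wt n t0 s x u * wt n t0 s x v)"
  using sq_split[of xA "wt n t0 s x" "wt n t0 s x"] by (simp add: XX_def power2_eq_square)

lemma p7: "WW n t0 s x = (\<Sum>u\<in>xP. \<Sum>v\<in>xP-{u}. (rho s (x u) * zeta (x u)) * (rho s (x v) * (1 - zeta (x v))) / xN)"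
proof -
  have NS: "xN - xS = (\<Sum>v\<in>xP. rho s (x v) * (1 - zeta (x v)))"
    by (simp add: NN_def SS_def algebra_simps sum_subtractf)
  have z: "(rho s (x u) * zeta (x u)) * (rho s (x u) * (1 - zeta (x u))) = 0" for u
    using zeta01[of "x u"] by auto
  have eS: "xS = (\<Sum>u\<in>xP. rho s (x u) * zeta (x u))" by (simp add: SS_def)
  have "xS * (xN - xS) = (\<Sum>u\<in>xP. rho s (x u) * zeta (x u)) * (\<Sum>v\<in>xP. rho s (x v) * (1 - zeta (x v)))"
    unfolding NS by (subst eS) (rule refl)
  also have "\<dots> = (\<Sum>u\<in>xP. \<Sum>v\<in>xP-{u}. (rho s (x u) * zeta (x u)) * (rho s (x v) * (1 - zeta (x v))))"
    using sq_split[of xP "\<lambda>u. rho s (x u) * zeta (x u)" "\<lambda>v. rho s (x v) * (1 - zeta (x v))"]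
    by (simp add: z)
  finally have "xS * (xN - xS) = (\<Sum>u\<in>xP. \<Sum>v\<in>xP-{u}. (rho s (x u) * zeta (x u)) * (rho s (x v) * (1 - zeta (x v))))" .
  then show ?thesis by (simp add: WW_def sum_divide_distrib)
qed

lemma p8: "(\<Sum>u\<in>xP. \<Sum>v\<in>xP-{u}. rho s (x u) * rho s (x v) / xN) = xN - 1 + of_bool (xN = 0)"
proof -
  have "(\<Sum>u\<in>xP. \<Sum>v\<in>xP-{u}. rho s (x u) * rho s (x v)) = xN * xN - xN"
    using sq_split[of xP "\<lambda>u. rho s (x u)" "\<lambda>u. rho s (x u)"] by (simp add: NN_def)
  then have "(\<Sum>u\<in>xP. \<Sum>v\<in>xP-{u}. rho s (x u) * rho s (x v) / xN) = (xN * xN - xN) / xN"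
    by (simp add: sum_divide_distrib[symmetric])
  also have "\<dots> = xN - 1 + of_bool (xN = 0)"
    by (cases "xN = 0") (simp_all add: field_simps)
  finally show ?thesis .
qed

lemma p9: "of_bool (xN = 0) = (\<Prod>u\<in>xP. 1 - rho s (x u))"
proof -
  have "(xN = 0) \<longleftrightarrow> (\<forall>u\<in>xP. rho s (x u) = 0)"
    unfolding NN_def by (rule sum_nonneg_eq_0_iff) (auto simp: rho_def)
  moreover have "(\<Prod>u\<in>xP. 1 - rho s (x u)) = of_bool (\<forall>u\<in>xP. rho s (x u) = 0)"
    using fin_PP[of n t0 s]
  proof (induction rule: finite_induct)
    case empty then show ?case by simp
  next
    case (insert u F) then show ?case using rho01[of s "x u"] by auto
  qed
  ultimately show ?thesis by simp
qed

lemma p10: "card xP \<le> 1 \<Longrightarrow> WW n t0 s x = 0"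
proof -
  assume c: "card xP \<le> 1"
  obtain a b where ab: "xN = real a" "xS = real b" "b \<le> a" "a \<le> card xP" using NS_nat[of n t0 s x] by blast
  then have "a = 0 \<or> a = 1" using c by auto
  then show ?thesis using ab by (auto simp: WW_def)
qed

end

lemma sym_sum1:
  fixes F :: "nat \<Rightarrow> 'a \<Rightarrow> real"
  assumes fin: "finite P" and i: "i \<in> P"
    and eq: "\<And>j. j \<in> P \<Longrightarrow> (\<integral>x. F j x \<partial>\<Omega>) = (\<integral>x. F i x \<partial>\<Omega>)"
    and int: "\<And>j. j \<in> P \<Longrightarrow> integrable \<Omega> (F j)"
  shows "real (card P) * (\<integral>x. F i x \<partial>\<Omega>) = (\<integral>x. (\<Sum>j\<in>P. F j x) \<partial>\<Omega>)"
proof -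
  have "real (card P) * (\<integral>x. F i x \<partial>\<Omega>) = (\<Sum>j\<in>P. \<integral>x. F j x \<partial>\<Omega>)" using eq by simp
  also have "\<dots> = (\<integral>x. (\<Sum>j\<in>P. F j x) \<partial>\<Omega>)" by (rule Bochner_Integration.integral_sum[symmetric]) (rule int)
  finally show ?thesis .
qed

lemma sym_sum2:
  fixes F :: "nat \<Rightarrow> nat \<Rightarrow> 'a \<Rightarrow> real"
  assumes fin: "finite P"
    and eq: "\<And>j j'. j \<in> P \<Longrightarrow> j' \<in> P \<Longrightarrow> j \<noteq> j' \<Longrightarrow> (\<integral>x. F j j' x \<partial>\<Omega>) = c"
    and int: "\<And>j j'. j \<in> P \<Longrightarrow> j' \<in> P \<Longrightarrow> integrable \<Omega> (F j j')"
  shows "real (card P) * (real (card P) - 1) * c = (\<integral>x. (\<Sum>j\<in>P. \<Sum>j'\<in>P-{j}. F j j' x) \<partial>\<Omega>)"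
proof -
  have "(\<integral>x. (\<Sum>j\<in>P. \<Sum>j'\<in>P-{j}. F j j' x) \<partial>\<Omega>) = (\<Sum>j\<in>P. \<integral>x. (\<Sum>j'\<in>P-{j}. F j j' x) \<partial>\<Omega>)"
    by (rule Bochner_Integration.integral_sum) (auto intro!: Bochner_Integration.integrable_sum int)
  also have "\<dots> = (\<Sum>j\<in>P. \<Sum>j'\<in>P-{j}. \<integral>x. F j j' x \<partial>\<Omega>)"
    by (intro sum.cong refl Bochner_Integration.integral_sum) (auto intro: int)
  also have "\<dots> = (\<Sum>j\<in>P. \<Sum>j'\<in>P-{j}. c)"
    by (intro sum.cong refl) (auto intro: eq)
  also have "\<dots> = (\<Sum>j\<in>P. (real (card P) - 1) * c)"
  proof (intro sum.cong refl)
    fix j assume j: "j \<in> P"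
    then have "card P \<ge> 1" using fin by (metis card_0_eq empty_iff less_one not_le)
    then have "real (card (P - {j})) = real (card P) - 1" using j fin by (simp add: card_Diff_singleton of_nat_diff)
    then show "(\<Sum>j'\<in>P-{j}. c) = (real (card P) - 1) * c" by simp
  qed
  finally show ?thesis
    by (cases "card P = 0") (simp_all add: algebra_simps)
qed

lemma sum_permv:
  assumes "\<pi> permutes P" "P \<subseteq> I"
  shows "(\<Sum>u\<in>P. g (permv I \<pi> x u)) = (\<Sum>u\<in>P. g (x u))"
proof -
  have "(\<Sum>u\<in>P. g (permv I \<pi> x u)) = (\<Sum>u\<in>P. ((\<lambda>u. g (x u)) \<circ> \<pi>) u)"
    using assms(2) by (intro sum.cong refl) (auto simp: permv_apply)
  also have "\<dots> = (\<Sum>u\<in>P. g (x u))" by (rule sum.permute[symmetric, OF assms(1)])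
  finally show ?thesis .
qed

lemma NN_perm: "\<pi> permutes PP n t0 s \<Longrightarrow> NN n t0 s (permv {..<n} \<pi> x) = NN n t0 s x"
  unfolding NN_def by (rule sum_permv[OF _ PP_sub])
lemma SS_perm: "\<pi> permutes PP n t0 s \<Longrightarrow> SS n t0 s (permv {..<n} \<pi> x) = SS n t0 s x"
  unfolding SS_def by (rule sum_permv[OF _ PP_sub])
lemma wt_perm: "\<pi> permutes PP n t0 s \<Longrightarrow> i < n \<Longrightarrow> wt n t0 s (permv {..<n} \<pi> x) i = wt n t0 s x (\<pi> i)"
  unfolding wt_def by (simp add: NN_perm SS_perm permv_apply)
lemma hh_perm: "\<pi> permutes PP n t0 s \<Longrightarrow> hh n t0 s (permv {..<n} \<pi> x) = hh n t0 s x"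
  unfolding hh_def by (simp add: NN_perm SS_perm)

lemma SN_bounds: "0 \<le> SS n t0 s x / NN n t0 s x" "SS n t0 s x / NN n t0 s x \<le> 1"
  using NS_nat[of n t0 s x] by (auto simp: divide_le_eq_1)

lemma wt_bound: "\<bar>wt n t0 s x u\<bar> \<le> 1"
proof -
  have "\<bar>zeta (x u) - SS n t0 s x / NN n t0 s x\<bar> \<le> 1"
    using SN_bounds[of n t0 s x] zeta01[of "x u"] by auto
  then show ?thesis using rho01[of s "x u"] by (auto simp: wt_def abs_mult)
qed

lemma num_le: "b \<le> a \<Longrightarrow> real b * (real a - real b) \<le> real a * real a"
  by (intro mult_mono) auto

lemma hh_bound: "0 \<le> hh n t0 s x \<and> hh n t0 s x \<le> 1"
proof -
  obtain a b where ab: "NN n t0 s x = real a" "SS n t0 s x = real b" "b \<le> a" using NS_nat[of n t0 s x] by blast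
  consider "a = 0" | "a = 1" | "a \<ge> 2" by linarith
  then show ?thesis
  proof cases
    case 1 then show ?thesis using ab by (simp add: hh_def)
  next
    case 2 then show ?thesis using ab by (simp add: hh_def)
  next
    case 3
    have num: "real b * (real a - real b) \<le> real a * real a" using num_le[OF ab(3)] .
    have num0: "0 \<le> real b * (real a - real b)" using ab(3) by simp
    have a1: "1 \<le> real a - 1" using 3 by simp
    have "(real a * real a) * 1 \<le> (real a * real a) * (real a - 1)"
      by (rule mult_left_mono[OF a1]) simp
    then have den: "real a * real a \<le> (real a)\<^sup>2 * (real a - 1)" by (simp add: power2_eq_square)
    have dpos: "0 < (real a)\<^sup>2 * (real a - 1)" using 3 by simp
    have "real b * (real a - real b) / ((real a)\<^sup>2 * (real a - 1)) \<le> 1"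
      using num den dpos by (simp add: pos_divide_le_eq)
    moreover have "0 \<le> real b * (real a - real b) / ((real a)\<^sup>2 * (real a - 1))"
      using num0 dpos by simp
    ultimately show ?thesis using ab by (simp add: hh_def)
  qed
qed

lemma WW_bound: "0 \<le> WW n t0 s x \<and> WW n t0 s x \<le> real n"
proof -
  obtain a b where ab: "NN n t0 s x = real a" "SS n t0 s x = real b" "b \<le> a" "a \<le> card (PP n t0 s)"
    using NS_nat[of n t0 s x] by blast
  have "card (PP n t0 s) \<le> n" using card_mono[OF _ PP_sub, of n t0 s] by simp
  then have an: "real a \<le> real n" using ab by simp
  show ?thesis
  proof (cases "a = 0")
    case True then show ?thesis using ab by (simp add: WW_def)
  next
    case False
    then have apos: "0 < real a" by simp
    have "real b * (real a - real b) / real a \<le> real a"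
      using num_le[OF ab(3)] apos by (simp add: pos_divide_le_eq)
    moreover have "0 \<le> real b * (real a - real b) / real a" using ab(3) by simp
    ultimately show ?thesis using ab an by (simp add: WW_def)
  qed
qed

definition Hq where "Hq n t0 s x u v = 1 / (2 + (\<Sum>w\<in>PP n t0 s - {u, v}. rho s (x w)))"

lemma Hq_bound: "0 \<le> Hq n t0 s x u v \<and> Hq n t0 s x u v \<le> 1"
proof -
  have "0 \<le> (\<Sum>w\<in>PP n t0 s - {u, v}. rho s (x w))" by (intro sum_nonneg) (simp add: rho_def)
  then show ?thesis by (simp add: Hq_def)
qed

lemma N_split:
  assumes "u \<in> PP n t0 s" "v \<in> PP n t0 s" "u \<noteq> v"
  shows "NN n t0 s x = rho s (x u) + rho s (x v) + (\<Sum>w\<in>PP n t0 s - {u, v}. rho s (x w))"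
proof -
  have "NN n t0 s x = rho s (x u) + (\<Sum>w\<in>PP n t0 s - {u}. rho s (x w))"
    unfolding NN_def using assms by (simp add: sum.remove)
  also have "(\<Sum>w\<in>PP n t0 s - {u}. rho s (x w)) = rho s (x v) + (\<Sum>w\<in>PP n t0 s - {u} - {v}. rho s (x w))"
    using assms by (intro sum.remove) auto
  also have "PP n t0 s - {u} - {v} = PP n t0 s - {u, v}" by auto
  finally show ?thesis by simp
qed

lemma div_N_Hq:
  assumes "u \<in> PP n t0 s" "v \<in> PP n t0 s" "u \<noteq> v"
    and fz: "rho s (x u) = 0 \<Longrightarrow> f = 0" and gz: "rho s (x v) = 0 \<Longrightarrow> g = 0"
  shows "f * g / NN n t0 s x = f * (g * Hq n t0 s x u v)"
proof (cases "rho s (x u) = 1 \<and> rho s (x v) = 1")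
  case True
  then show ?thesis using N_split[OF assms(1-3), of x] by (simp add: Hq_def)
next
  case False
  then have "f = 0 \<or> g = 0" using rho01[of s "x u"] rho01[of s "x v"] fz gz by auto
  then show ?thesis by auto
qed

locale lr =
  fixes \<nu> :: "(bool \<times> ennreal \<times> ennreal) measure" and n :: nat and t0 :: "nat \<Rightarrow> real"
  assumes nu: "prob_space \<nu>"
    and sets_nu: "sets \<nu> = sets (count_space UNIV \<Otimes>\<^sub>M (borel :: (ennreal \<times> ennreal) measure))"
begin

abbreviation "Om \<equiv> PiM {..<n} (\<lambda>_. \<nu>)"

lemma Om_prob: "prob_space Om" using nu by (intro prob_space_PiM) auto

lemma rho_m: "rho s \<in> borel_measurable \<nu>"
  by (subst measurable_cong_sets[OF sets_nu refl]) (rule meas_rho)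
lemma zeta_m: "zeta \<in> borel_measurable \<nu>"
  by (subst measurable_cong_sets[OF sets_nu refl]) (rule meas_zeta)
lemma comp_m: "u < n \<Longrightarrow> (\<lambda>x. x u) \<in> measurable Om \<nu>"
  by (rule measurable_component_singleton) simp
lemma rho_c: "u < n \<Longrightarrow> (\<lambda>x. rho s (x u)) \<in> borel_measurable Om"
  by (rule measurable_compose[OF comp_m rho_m])
lemma zeta_c: "u < n \<Longrightarrow> (\<lambda>x. zeta (x u)) \<in> borel_measurable Om"
  by (rule measurable_compose[OF comp_m zeta_m])

lemma NN_m: "(\<lambda>x. NN n t0 s x) \<in> borel_measurable Om"
  unfolding NN_def by (intro borel_measurable_sum) (auto intro: rho_c simp: PP_def)
lemma SS_m: "(\<lambda>x. SS n t0 s x) \<in> borel_measurable Om"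
  unfolding SS_def by (intro borel_measurable_sum borel_measurable_times) (auto intro: rho_c zeta_c simp: PP_def)
lemma wt_m: "u < n \<Longrightarrow> (\<lambda>x. wt n t0 s x u) \<in> borel_measurable Om"
  unfolding wt_def by (intro borel_measurable_times borel_measurable_diff borel_measurable_divide rho_c zeta_c SS_m NN_m)
lemma XX_m: "(\<lambda>x. XX n t0 s x) \<in> borel_measurable Om"
  unfolding XX_def by (intro borel_measurable_sum) (auto intro: wt_m simp: AA_def)
lemma hh_m: "(\<lambda>x. hh n t0 s x) \<in> borel_measurable Om"
  unfolding hh_def by (intro borel_measurable_times borel_measurable_diff borel_measurable_divide
      borel_measurable_power SS_m NN_m borel_measurable_const)
lemma WW_m: "(\<lambda>x. WW n t0 s x) \<in> borel_measurable Om"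
  unfolding WW_def by (intro borel_measurable_times borel_measurable_diff borel_measurable_divide SS_m NN_m)

lemma intb: "(f::_ \<Rightarrow> real) \<in> borel_measurable Om \<Longrightarrow> (\<And>x. \<bar>f x\<bar> \<le> (B::real)) \<Longrightarrow> integrable Om f"
proof -
  assume f: "f \<in> borel_measurable Om" and b: "\<And>x. \<bar>f x\<bar> \<le> B"
  interpret p: prob_space Om by (rule Om_prob)
  show ?thesis by (rule p.integrable_const_bound[where B=B]) (use b f in auto)
qed

lemma wt_int: "u < n \<Longrightarrow> integrable Om (\<lambda>x. wt n t0 s x u)"
  by (rule intb[OF wt_m wt_bound])

lemma E_wt0:
  assumes i: "i \<in> PP n t0 s"
  shows "(\<integral>x. wt n t0 s x i \<partial>Om) = 0"
proof (rule sym_zero[where P="PP n t0 s" and F="\<lambda>j x. wt n t0 s x j"])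
  show "finite (PP n t0 s)" by simp
  show "i \<in> PP n t0 s" by (rule i)
  fix j assume j: "j \<in> PP n t0 s"
  have jn: "j < n" "i < n" using j i by (auto simp: PP_def)
  show "integrable Om (\<lambda>x. wt n t0 s x j)" by (rule wt_int[OF jn(1)])
  show "(\<integral>x. wt n t0 s x j \<partial>Om) = (\<integral>x. wt n t0 s x i \<partial>Om)"
    by (rule sym1[OF nu PP_sub j i]) (auto intro: wt_m[OF jn(1)] simp: wt_perm jn)
next
  fix x show "(\<Sum>j\<in>PP n t0 s. wt n t0 s x j) = 0" by (rule p1)
qed

lemma E_XX0: "(\<integral>x. XX n t0 s x \<partial>Om) = 0"
proof -
  have "(\<integral>x. XX n t0 s x \<partial>Om) = (\<Sum>u\<in>AA n t0 s. \<integral>x. wt n t0 s x u \<partial>Om)"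
    unfolding XX_def by (rule Bochner_Integration.integral_sum) (auto intro: wt_int simp: AA_def)
  also have "\<dots> = 0" using AA_PP by (auto intro!: sum.neutral E_wt0)
  finally show ?thesis .
qed


lemma XX_bound: "\<bar>XX n t0 s x\<bar> \<le> real n"
proof -
  have "\<bar>XX n t0 s x\<bar> \<le> (\<Sum>u\<in>AA n t0 s. \<bar>wt n t0 s x u\<bar>)" unfolding XX_def by (rule sum_abs)
  also have "\<dots> \<le> (\<Sum>u\<in>AA n t0 s. 1)" by (intro sum_mono wt_bound)
  also have "\<dots> = real (card (AA n t0 s))" by simp
  also have "\<dots> \<le> real n" using card_mono[of "{..<n}" "AA n t0 s"] by (auto simp: AA_def)
  finally show ?thesis .
qed

lemma XXwt_bound: "\<bar>XX n t0 s x * wt n t0 s' x j\<bar> \<le> real n"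
proof -
  have "\<bar>XX n t0 s x\<bar> * \<bar>wt n t0 s' x j\<bar> \<le> real n * 1"
    by (rule mult_mono[OF XX_bound wt_bound]) auto
  then show ?thesis by (simp add: abs_mult)
qed

lemma XX_int: "integrable Om (\<lambda>x. XX n t0 s x)" by (rule intb[OF XX_m XX_bound])

lemma XX_perm:
  assumes ss: "s < s'" and pi: "\<pi> permutes PP n t0 s'"
  shows "XX n t0 s (permv {..<n} \<pi> x) = XX n t0 s x"
proof -
  have sub: "PP n t0 s' \<subseteq> PP n t0 s" using ss by (auto simp: PP_def)
  have pi2: "\<pi> permutes PP n t0 s" by (rule permutes_subset[OF pi sub])
  have fx: "\<pi> u = u" if "u \<in> AA n t0 s" for u
    using that ss by (intro permutes_not_in[OF pi]) (auto simp: AA_def PP_def)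
  show ?thesis unfolding XX_def wt_def
    by (intro sum.cong refl) (auto simp: NN_perm[OF pi2] SS_perm[OF pi2] permv_apply fx AA_def)
qed

lemma E_cross:
  assumes ss: "s < s'"
  shows "(\<integral>x. XX n t0 s x * XX n t0 s' x \<partial>Om) = 0"
proof -
  have one: "(\<integral>x. XX n t0 s x * wt n t0 s' x i \<partial>Om) = 0" if i: "i \<in> PP n t0 s'" for i
  proof (rule sym_zero[where P="PP n t0 s'" and F="\<lambda>j x. XX n t0 s x * wt n t0 s' x j"])
    show "finite (PP n t0 s')" by simp
    show "i \<in> PP n t0 s'" by (rule i)
    fix j assume j: "j \<in> PP n t0 s'"
    have jn: "j < n" "i < n" using j i by (auto simp: PP_def)
    show "integrable Om (\<lambda>x. XX n t0 s x * wt n t0 s' x j)"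
      by (rule intb[where B="real n"]) (auto intro!: borel_measurable_times XX_m wt_m jn
          XXwt_bound)
    show "(\<integral>x. XX n t0 s x * wt n t0 s' x j \<partial>Om) = (\<integral>x. XX n t0 s x * wt n t0 s' x i \<partial>Om)"
      by (rule sym1[OF nu PP_sub j i]) (auto intro!: borel_measurable_times XX_m wt_m jn simp: wt_perm XX_perm[OF ss] jn)
  next
    fix x show "(\<Sum>j\<in>PP n t0 s'. XX n t0 s x * wt n t0 s' x j) = 0"
      by (simp add: sum_distrib_left[symmetric] p1)
  qed
  have "(\<integral>x. XX n t0 s x * XX n t0 s' x \<partial>Om) = (\<integral>x. (\<Sum>i\<in>AA n t0 s'. XX n t0 s x * wt n t0 s' x i) \<partial>Om)"
    by (simp add: XX_def[of n t0 s'] sum_distrib_left)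
  also have "\<dots> = (\<Sum>i\<in>AA n t0 s'. \<integral>x. XX n t0 s x * wt n t0 s' x i \<partial>Om)"
    by (rule Bochner_Integration.integral_sum)
       (auto intro!: intb[where B="real n"] borel_measurable_times XX_m wt_m
          XXwt_bound simp: AA_def)
  also have "\<dots> = 0" using AA_PP by (auto intro!: sum.neutral one)
  finally show ?thesis .
qed

lemma pair_count:
  assumes "finite A"
  shows "(\<Sum>u\<in>A. \<Sum>v\<in>A-{u}. (c::real)) = real (card A) * (real (card A) - 1) * c"
proof -
  have "(\<Sum>u\<in>A. \<Sum>v\<in>A-{u}. c) = (\<Sum>u\<in>A. (real (card A) - 1) * c)"
  proof (intro sum.cong refl)
    fix j assume j: "j \<in> A"
    then have "card A \<ge> 1" using assms by (metis card_0_eq empty_iff less_one not_le)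
    then have "real (card (A - {j})) = real (card A) - 1" using j assms by (simp add: card_Diff_singleton of_nat_diff)
    then show "(\<Sum>j'\<in>A-{j}. c) = (real (card A) - 1) * c" by simp
  qed
  then show ?thesis by simp
qed

lemma divlem: "(c::real) \<noteq> 0 \<Longrightarrow> c * e = w \<Longrightarrow> e = w / c"
  by (simp add: field_simps)

lemma wtwt_bound: "\<bar>wt n t0 s x u * wt n t0 s x v\<bar> \<le> 1"
proof -
  have "\<bar>wt n t0 s x u\<bar> * \<bar>wt n t0 s x v\<bar> \<le> 1 * 1"
    by (rule mult_mono[OF wt_bound wt_bound]) auto
  then show ?thesis by (simp add: abs_mult)
qed

lemma wt2_bound: "\<bar>(wt n t0 s x u)\<^sup>2\<bar> \<le> 1"
  using wtwt_bound[of s x u u] by (simp add: power2_eq_square)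

lemma rrh_bound: "\<bar>rho s (x u) * rho s (x v) * hh n t0 s x\<bar> \<le> 1"
  using rho01[of s "x u"] rho01[of s "x v"] hh_bound[of n t0 s x] by auto

lemma rrh_m: "u < n \<Longrightarrow> v < n \<Longrightarrow> (\<lambda>x. rho s (x u) * rho s (x v) * hh n t0 s x) \<in> borel_measurable Om"
  by (intro borel_measurable_times rho_c hh_m)

lemma WW_int: "integrable Om (\<lambda>x. WW n t0 s x)"
  by (rule intb[OF WW_m, where B="real n"]) (use WW_bound in auto)

lemma E_wt2:
  assumes i: "i \<in> PP n t0 s"
  shows "(\<integral>x. (wt n t0 s x i)\<^sup>2 \<partial>Om) = (\<integral>x. WW n t0 s x \<partial>Om) / real (card (PP n t0 s))"
proof -
  have in_: "i < n" using i by (auto simp: PP_def)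
  have "real (card (PP n t0 s)) * (\<integral>x. (wt n t0 s x i)\<^sup>2 \<partial>Om) = (\<integral>x. (\<Sum>j\<in>PP n t0 s. (wt n t0 s x j)\<^sup>2) \<partial>Om)"
  proof (rule sym_sum1[where F="\<lambda>j x. (wt n t0 s x j)\<^sup>2"])
    fix j assume j: "j \<in> PP n t0 s"
    have jn: "j < n" using j by (auto simp: PP_def)
    show "integrable Om (\<lambda>x. (wt n t0 s x j)\<^sup>2)"
      by (rule intb[OF _ wt2_bound]) (intro borel_measurable_power wt_m jn)
    show "(\<integral>x. (wt n t0 s x j)\<^sup>2 \<partial>Om) = (\<integral>x. (wt n t0 s x i)\<^sup>2 \<partial>Om)"
      by (rule sym1[OF nu PP_sub j i]) (auto intro!: borel_measurable_power wt_m jn simp: wt_perm jn)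
  qed (use i in simp_all)
  also have "\<dots> = (\<integral>x. WW n t0 s x \<partial>Om)" by (simp add: p2)
  finally have e: "real (card (PP n t0 s)) * (\<integral>x. (wt n t0 s x i)\<^sup>2 \<partial>Om) = (\<integral>x. WW n t0 s x \<partial>Om)" .
  have "card (PP n t0 s) \<noteq> 0" using i by (auto simp: card_eq_0_iff)
  then have nz: "real (card (PP n t0 s)) \<noteq> 0" by simp
  show ?thesis using divlem[OF nz e] by simp
qed

lemma E_wtwt:
  assumes i: "i \<in> PP n t0 s" "i' \<in> PP n t0 s" "i \<noteq> i'"
  shows "(\<integral>x. wt n t0 s x i * wt n t0 s x i' \<partial>Om)
     = - (\<integral>x. WW n t0 s x \<partial>Om) / (real (card (PP n t0 s)) * (real (card (PP n t0 s)) - 1))"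
proof -
  have in_: "i < n" "i' < n" using i by (auto simp: PP_def)
  have "real (card (PP n t0 s)) * (real (card (PP n t0 s)) - 1) * (\<integral>x. wt n t0 s x i * wt n t0 s x i' \<partial>Om)
     = (\<integral>x. (\<Sum>j\<in>PP n t0 s. \<Sum>j'\<in>PP n t0 s-{j}. wt n t0 s x j * wt n t0 s x j') \<partial>Om)"
  proof (rule sym_sum2[where F="\<lambda>j j' x. wt n t0 s x j * wt n t0 s x j'"])
    fix j j' assume j: "j \<in> PP n t0 s" "j' \<in> PP n t0 s"
    have jn: "j < n" "j' < n" using j by (auto simp: PP_def)
    show "integrable Om (\<lambda>x. wt n t0 s x j * wt n t0 s x j')"
      by (rule intb[OF _ wtwt_bound]) (intro borel_measurable_times wt_m jn)
    assume d: "j \<noteq> j'"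
    show "(\<integral>x. wt n t0 s x j * wt n t0 s x j' \<partial>Om) = (\<integral>x. wt n t0 s x i * wt n t0 s x i' \<partial>Om)"
      by (rule sym2[OF nu PP_sub j i(1,2) d i(3)]) (auto intro!: borel_measurable_times wt_m jn simp: wt_perm jn)
  qed simp
  also have "\<dots> = - (\<integral>x. WW n t0 s x \<partial>Om)" by (simp add: p3)
  finally have e: "real (card (PP n t0 s)) * (real (card (PP n t0 s)) - 1) * (\<integral>x. wt n t0 s x i * wt n t0 s x i' \<partial>Om) = - (\<integral>x. WW n t0 s x \<partial>Om)" .
  have "card {i, i'} \<le> card (PP n t0 s)" using i by (intro card_mono) auto
  then have "2 \<le> card (PP n t0 s)" using i by simp
  then have c2: "2 \<le> real (card (PP n t0 s))" by simp
  have "0 < real (card (PP n t0 s)) * (real (card (PP n t0 s)) - 1)" using c2 by (intro mult_pos_pos) auto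
  then have nz: "real (card (PP n t0 s)) * (real (card (PP n t0 s)) - 1) \<noteq> 0" by linarith
  show ?thesis using divlem[OF nz e] by simp
qed

lemma E_rrh:
  assumes i: "i \<in> PP n t0 s" "i' \<in> PP n t0 s" "i \<noteq> i'"
  shows "(\<integral>x. rho s (x i) * rho s (x i') * hh n t0 s x \<partial>Om)
     = (\<integral>x. WW n t0 s x \<partial>Om) / (real (card (PP n t0 s)) * (real (card (PP n t0 s)) - 1))"
proof -
  have in_: "i < n" "i' < n" using i by (auto simp: PP_def)
  have "real (card (PP n t0 s)) * (real (card (PP n t0 s)) - 1) * (\<integral>x. rho s (x i) * rho s (x i') * hh n t0 s x \<partial>Om)
     = (\<integral>x. (\<Sum>j\<in>PP n t0 s. \<Sum>j'\<in>PP n t0 s-{j}. rho s (x j) * rho s (x j') * hh n t0 s x) \<partial>Om)"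
  proof (rule sym_sum2[where F="\<lambda>j j' x. rho s (x j) * rho s (x j') * hh n t0 s x"])
    fix j j' assume j: "j \<in> PP n t0 s" "j' \<in> PP n t0 s"
    have jn: "j < n" "j' < n" using j by (auto simp: PP_def)
    show "integrable Om (\<lambda>x. rho s (x j) * rho s (x j') * hh n t0 s x)"
      by (rule intb[OF rrh_m[OF jn] rrh_bound])
    assume d: "j \<noteq> j'"
    show "(\<integral>x. rho s (x j) * rho s (x j') * hh n t0 s x \<partial>Om) = (\<integral>x. rho s (x i) * rho s (x i') * hh n t0 s x \<partial>Om)"
      by (rule sym2[OF nu PP_sub j i(1,2) d i(3)]) (auto intro!: rrh_m jn simp: hh_perm permv_apply jn)
  qed simp
  also have "\<dots> = (\<integral>x. WW n t0 s x \<partial>Om)" by (simp add: p4)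
  finally have e: "real (card (PP n t0 s)) * (real (card (PP n t0 s)) - 1) * (\<integral>x. rho s (x i) * rho s (x i') * hh n t0 s x \<partial>Om) = (\<integral>x. WW n t0 s x \<partial>Om)" .
  have "card {i, i'} \<le> card (PP n t0 s)" using i by (intro card_mono) auto
  then have "2 \<le> card (PP n t0 s)" using i by simp
  then have c2: "2 \<le> real (card (PP n t0 s))" by simp
  have "0 < real (card (PP n t0 s)) * (real (card (PP n t0 s)) - 1)" using c2 by (intro mult_pos_pos) auto
  then have nz: "real (card (PP n t0 s)) * (real (card (PP n t0 s)) - 1) \<noteq> 0" by linarith
  show ?thesis using divlem[OF nz e] by simp
qed

lemma E_XX2: "(\<integral>x. (XX n t0 s x)\<^sup>2 \<partial>Om) = real (card (AA n t0 s)) * (real (card (PP n t0 s)) - real (card (AA n t0 s)))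
      / (real (card (PP n t0 s)) * (real (card (PP n t0 s)) - 1)) * (\<integral>x. WW n t0 s x \<partial>Om)"
proof -
  let ?A = "AA n t0 s" and ?P = "PP n t0 s" and ?E = "\<integral>x. WW n t0 s x \<partial>Om"
  let ?K = "real (card ?P)" and ?d = "real (card ?A)"
  have An: "u \<in> ?A \<Longrightarrow> u < n" for u by (auto simp: AA_def)
  have "(\<integral>x. (XX n t0 s x)\<^sup>2 \<partial>Om) = (\<integral>x. (\<Sum>u\<in>?A. (wt n t0 s x u)\<^sup>2) + (\<Sum>u\<in>?A. \<Sum>v\<in>?A-{u}. wt n t0 s x u * wt n t0 s x v) \<partial>Om)"
    by (simp add: p6)
  also have "\<dots> = (\<integral>x. (\<Sum>u\<in>?A. (wt n t0 s x u)\<^sup>2) \<partial>Om) + (\<integral>x. (\<Sum>u\<in>?A. \<Sum>v\<in>?A-{u}. wt n t0 s x u * wt n t0 s x v) \<partial>Om)"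
    by (rule Bochner_Integration.integral_add)
      (auto intro!: Bochner_Integration.integrable_sum intb[OF _ wt2_bound] intb[OF _ wtwt_bound]
        borel_measurable_power borel_measurable_times wt_m An)
  also have "(\<integral>x. (\<Sum>u\<in>?A. (wt n t0 s x u)\<^sup>2) \<partial>Om) = (\<Sum>u\<in>?A. \<integral>x. (wt n t0 s x u)\<^sup>2 \<partial>Om)"
    by (rule Bochner_Integration.integral_sum)
      (auto intro!: intb[OF _ wt2_bound] borel_measurable_power wt_m An)
  also have "\<dots> = (\<Sum>u\<in>?A. ?E / ?K)"
    using AA_PP by (intro sum.cong refl E_wt2) auto
  also have "(\<integral>x. (\<Sum>u\<in>?A. \<Sum>v\<in>?A-{u}. wt n t0 s x u * wt n t0 s x v) \<partial>Om)
      = (\<Sum>u\<in>?A. \<Sum>v\<in>?A-{u}. \<integral>x. wt n t0 s x u * wt n t0 s x v \<partial>Om)"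
    by (subst Bochner_Integration.integral_sum,
        auto intro!: Bochner_Integration.integrable_sum intb[OF _ wtwt_bound] borel_measurable_times wt_m An
          sum.cong Bochner_Integration.integral_sum)
  also have "\<dots> = (\<Sum>u\<in>?A. \<Sum>v\<in>?A-{u}. - ?E / (?K * (?K - 1)))"
    using AA_PP by (intro sum.cong refl E_wtwt) auto
  also have "\<dots> = ?d * (?d - 1) * (- ?E / (?K * (?K - 1)))" by (rule pair_count) simp
  finally have e: "(\<integral>x. (XX n t0 s x)\<^sup>2 \<partial>Om) = ?d * (?E / ?K) + ?d * (?d - 1) * (- ?E / (?K * (?K - 1)))"
    by simp
  have dK: "card ?A \<le> card ?P" by (rule card_mono[OF fin_PP AA_PP])
  show ?thesis
  proof (cases "card ?P \<ge> 2")
    case True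
    then have "?K \<noteq> 0" "?K - 1 \<noteq> 0" by auto
    then show ?thesis unfolding e by (simp add: field_simps)
  next
    case False
    then have W0: "?E = 0" using p10[of n t0 s] by simp
    show ?thesis unfolding e W0 by simp
  qed
qed

lemma E_VV: "(\<integral>x. VV n t0 s x \<partial>Om) = real (card (AA n t0 s)) * (real (card (PP n t0 s)) - real (card (AA n t0 s)))
      / (real (card (PP n t0 s)) * (real (card (PP n t0 s)) - 1)) * (\<integral>x. WW n t0 s x \<partial>Om)"
proof -
  let ?A = "AA n t0 s" and ?P = "PP n t0 s" and ?E = "\<integral>x. WW n t0 s x \<partial>Om"
  let ?K = "real (card ?P)" and ?d = "real (card ?A)"
  have Pn: "u \<in> ?P \<Longrightarrow> u < n" for u by (auto simp: PP_def)
  have An: "u \<in> ?A \<Longrightarrow> u < n" for u by (auto simp: AA_def)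
  have "(\<integral>x. VV n t0 s x \<partial>Om) = (\<integral>x. (\<Sum>u\<in>?A. \<Sum>v\<in>?P-?A. rho s (x u) * rho s (x v) * hh n t0 s x) \<partial>Om)"
    by (simp add: p5)
  also have "\<dots> = (\<Sum>u\<in>?A. \<Sum>v\<in>?P-?A. \<integral>x. rho s (x u) * rho s (x v) * hh n t0 s x \<partial>Om)"
    by (subst Bochner_Integration.integral_sum,
        auto intro!: Bochner_Integration.integrable_sum intb[OF _ rrh_bound] rrh_m
          sum.cong Bochner_Integration.integral_sum simp: AA_def PP_def)
  also have "\<dots> = (\<Sum>u\<in>?A. \<Sum>v\<in>?P-?A. ?E / (?K * (?K - 1)))"
    by (intro sum.cong refl E_rrh) (use AA_PP in auto)
  also have "\<dots> = ?d * (?K - ?d) * (?E / (?K * (?K - 1)))"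
    using card_Diff_subset[OF fin_AA AA_PP, of n t0 s] card_mono[OF fin_PP AA_PP, of n t0 s]
    by (simp add: of_nat_diff)
  finally show ?thesis by simp
qed

lemma rho_bound: "\<bar>rho s b\<bar> \<le> 1" by (simp add: rho_def)
lemma zeta_bound: "\<bar>zeta b\<bar> \<le> 1" by (simp add: zeta_def)

lemma Hq_m: "(\<lambda>x. Hq n t0 s x u v) \<in> borel_measurable Om"
  unfolding Hq_def by (intro borel_measurable_divide borel_measurable_add borel_measurable_const
      borel_measurable_sum) (auto intro: rho_c simp: PP_def)

lemma unit_int: "f \<in> borel_measurable \<nu> \<Longrightarrow> (\<And>b. \<bar>f b\<bar> \<le> (B::real)) \<Longrightarrow> integrable \<nu> f"
proof -
  assume f: "f \<in> borel_measurable \<nu>" and b: "\<And>b. \<bar>f b\<bar> \<le> B"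
  interpret p: prob_space \<nu> by (rule nu)
  show ?thesis by (rule p.integrable_const_bound[where B=B]) (use b f in auto)
qed

lemma E_pair:
  fixes f g :: "bool \<times> ennreal \<times> ennreal \<Rightarrow> real"
  assumes uv: "u \<in> PP n t0 s" "v \<in> PP n t0 s" "u \<noteq> v"
    and f: "f \<in> borel_measurable \<nu>" "\<And>b. \<bar>f b\<bar> \<le> 1"
    and g: "g \<in> borel_measurable \<nu>" "\<And>b. \<bar>g b\<bar> \<le> 1"
  shows "(\<integral>x. f (x u) * (g (x v) * Hq n t0 s x u v) \<partial>Om) = (\<integral>b. f b \<partial>\<nu>) * (\<integral>b. g b \<partial>\<nu>) * (\<integral>x. Hq n t0 s x u v \<partial>Om)"
proof -
  have un: "u < n" "v < n" using uv by (auto simp: PP_def)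
  have fm: "(\<lambda>x. f (x u)) \<in> borel_measurable Om" by (rule measurable_compose[OF comp_m[OF un(1)] f(1)])
  have gm: "(\<lambda>x. g (x v)) \<in> borel_measurable Om" by (rule measurable_compose[OF comp_m[OF un(2)] g(1)])
  have bH: "\<bar>Hq n t0 s x u v\<bar> \<le> 1" for x using Hq_bound[of n t0 s x u v] by auto
  have bgH: "\<bar>g (x v) * Hq n t0 s x u v\<bar> \<le> 1" for x
  proof -
    have "\<bar>g (x v)\<bar> * \<bar>Hq n t0 s x u v\<bar> \<le> 1 * 1" by (rule mult_mono[OF g(2) bH]) auto
    then show ?thesis by (simp add: abs_mult)
  qed
  have bfgH: "\<bar>f (x u) * (g (x v) * Hq n t0 s x u v)\<bar> \<le> 1" for x
  proof -
    have "\<bar>f (x u)\<bar> * \<bar>g (x v) * Hq n t0 s x u v\<bar> \<le> 1 * 1" by (rule mult_mono[OF f(2) bgH]) auto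
    then show ?thesis by (simp add: abs_mult)
  qed
  have Hu: "Hq n t0 s (x(u:=y)) u v = Hq n t0 s x u v" for x y
    unfolding Hq_def by (intro arg_cong[where f="\<lambda>z. 1 / (2 + z)"] sum.cong refl) auto
  have Hv: "Hq n t0 s (x(v:=y)) u v = Hq n t0 s x u v" for x y
    unfolding Hq_def by (intro arg_cong[where f="\<lambda>z. 1 / (2 + z)"] sum.cong refl) auto
  have "(\<integral>x. f (x u) * (g (x v) * Hq n t0 s x u v) \<partial>Om) = (\<integral>b. f b \<partial>\<nu>) * (\<integral>x. g (x v) * Hq n t0 s x u v \<partial>Om)"
  proof (rule indep1[OF nu, where j=u and H="\<lambda>x. g (x v) * Hq n t0 s x u v"])
    show "finite {..<n}" by simp
    show "u \<in> {..<n}" using un by simp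
    show "integrable Om (\<lambda>x. g (x v) * Hq n t0 s x u v)"
      by (rule intb[OF _ bgH]) (intro borel_measurable_times gm Hq_m)
    show "integrable Om (\<lambda>x. f (x u) * (g (x v) * Hq n t0 s x u v))"
      by (rule intb[OF _ bfgH]) (intro borel_measurable_times fm gm Hq_m)
    fix x y show "g ((x(u:=y)) v) * Hq n t0 s (x(u:=y)) u v = g (x v) * Hq n t0 s x u v"
      using uv by (simp add: Hu)
  qed
  also have "(\<integral>x. g (x v) * Hq n t0 s x u v \<partial>Om) = (\<integral>b. g b \<partial>\<nu>) * (\<integral>x. Hq n t0 s x u v \<partial>Om)"
  proof (rule indep1[OF nu, where j=v and H="\<lambda>x. Hq n t0 s x u v"])
    show "finite {..<n}" by simp
    show "v \<in> {..<n}" using un by simp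
    show "integrable Om (\<lambda>x. Hq n t0 s x u v)" by (rule intb[OF Hq_m bH])
    show "integrable Om (\<lambda>x. g (x v) * Hq n t0 s x u v)"
      by (rule intb[OF _ bgH]) (intro borel_measurable_times gm Hq_m)
    fix x y show "Hq n t0 s (x(v:=y)) u v = Hq n t0 s x u v" by (rule Hv)
  qed
  finally show ?thesis by simp
qed

lemma E_single:
  fixes f :: "bool \<times> ennreal \<times> ennreal \<Rightarrow> real"
  assumes u: "u < n" and f: "f \<in> borel_measurable \<nu>" "\<And>b. \<bar>f b\<bar> \<le> 1"
  shows "(\<integral>x. f (x u) \<partial>Om) = (\<integral>b. f b \<partial>\<nu>)"
proof -
  interpret p: prob_space Om by (rule Om_prob)
  have fm: "(\<lambda>x. f (x u)) \<in> borel_measurable Om" by (rule measurable_compose[OF comp_m[OF u] f(1)])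
  have "(\<integral>x. f (x u) * 1 \<partial>Om) = (\<integral>b. f b \<partial>\<nu>) * (\<integral>x. 1 \<partial>Om)"
    by (rule indep1[OF nu, where j=u and H="\<lambda>_. 1"]) (auto intro!: intb[OF fm f(2)] simp: u)
  then show ?thesis by (simp add: p.prob_space)
qed

lemma E_N0:
  "(\<integral>x. of_bool (NN n t0 s x = 0) \<partial>Om) = (1 - (\<integral>b. rho s b \<partial>\<nu>)) ^ card (PP n t0 s)"
proof -
  interpret p0: prob_space \<nu> by (rule nu)
  interpret ps: product_prob_space "\<lambda>_. \<nu>" by unfold_locales
  define F where "F i b = (if i \<in> PP n t0 s then 1 - rho s b else 1)" for i b
  have pw: "of_bool (NN n t0 s x = 0) = (\<Prod>i\<in>{..<n}. F i (x i))" for x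
  proof -
    have "(\<Prod>i\<in>{..<n}. F i (x i)) = (\<Prod>i\<in>{i\<in>{..<n}. i \<in> PP n t0 s}. 1 - rho s (x i))"
      by (subst prod.inter_filter) (auto simp: F_def)
    also have "{i\<in>{..<n}. i \<in> PP n t0 s} = PP n t0 s" using PP_sub by auto
    finally show ?thesis by (simp add: p9)
  qed
  have Fm: "F i \<in> borel_measurable \<nu>" for i
    unfolding F_def by (cases "i \<in> PP n t0 s") (auto intro!: borel_measurable_diff rho_m)
  have Fb: "\<bar>F i b\<bar> \<le> 1" for i b using rho01[of s b] by (auto simp: F_def)
  have "(\<integral>x. of_bool (NN n t0 s x = 0) \<partial>Om) = (\<integral>x. (\<Prod>i\<in>{..<n}. F i (x i)) \<partial>Om)"
    by (simp add: pw)
  also have "\<dots> = (\<Prod>i\<in>{..<n}. \<integral>b. F i b \<partial>\<nu>)"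
    by (rule ps.product_integral_prod) (auto intro: unit_int[OF Fm Fb])
  also have "\<dots> = (\<Prod>i\<in>{..<n}. if i \<in> PP n t0 s then 1 - (\<integral>b. rho s b \<partial>\<nu>) else 1)"
  proof (intro prod.cong refl)
    fix i
    have ri: "integrable \<nu> (rho s)" by (rule unit_int[OF rho_m rho_bound])
    show "(\<integral>b. F i b \<partial>\<nu>) = (if i \<in> PP n t0 s then 1 - (\<integral>b. rho s b \<partial>\<nu>) else 1)"
      by (auto simp: F_def Bochner_Integration.integral_diff[OF _ ri] p0.prob_space)
  qed
  also have "\<dots> = (\<Prod>i\<in>{i\<in>{..<n}. i \<in> PP n t0 s}. 1 - (\<integral>b. rho s b \<partial>\<nu>))"
    by (subst prod.inter_filter) auto
  also have "{i\<in>{..<n}. i \<in> PP n t0 s} = PP n t0 s" using PP_sub by auto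
  finally show ?thesis by simp
qed

lemma E_NN: "(\<integral>x. NN n t0 s x \<partial>Om) = real (card (PP n t0 s)) * (\<integral>b. rho s b \<partial>\<nu>)"
proof -
  have "(\<integral>x. NN n t0 s x \<partial>Om) = (\<Sum>u\<in>PP n t0 s. \<integral>x. rho s (x u) \<partial>Om)"
    unfolding NN_def by (rule Bochner_Integration.integral_sum)
      (auto intro!: intb[OF rho_c rho_bound] simp: PP_def)
  also have "\<dots> = (\<Sum>u\<in>PP n t0 s. \<integral>b. rho s b \<partial>\<nu>)"
    by (intro sum.cong refl E_single rho_m) (auto simp: PP_def rho_def)
  finally show ?thesis by simp
qed

lemma pair_int:
  fixes f g :: "bool \<times> ennreal \<times> ennreal \<Rightarrow> real"
  assumes un: "u < n" "v < n"
    and f: "f \<in> borel_measurable \<nu>" "\<And>b. \<bar>f b\<bar> \<le> 1"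
    and g: "g \<in> borel_measurable \<nu>" "\<And>b. \<bar>g b\<bar> \<le> 1"
  shows "integrable Om (\<lambda>x. f (x u) * (g (x v) * Hq n t0 s x u v))"
proof -
  have fm: "(\<lambda>x. f (x u)) \<in> borel_measurable Om" by (rule measurable_compose[OF comp_m[OF un(1)] f(1)])
  have gm: "(\<lambda>x. g (x v)) \<in> borel_measurable Om" by (rule measurable_compose[OF comp_m[OF un(2)] g(1)])
  have bH: "\<bar>Hq n t0 s x u v\<bar> \<le> 1" for x using Hq_bound[of n t0 s x u v] by auto
  have bfgH: "\<bar>f (x u) * (g (x v) * Hq n t0 s x u v)\<bar> \<le> 1" for x
  proof -
    have "\<bar>g (x v)\<bar> * \<bar>Hq n t0 s x u v\<bar> \<le> 1 * 1" by (rule mult_mono[OF g(2) bH]) auto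
    then have "\<bar>g (x v) * Hq n t0 s x u v\<bar> \<le> 1" by (simp add: abs_mult)
    then have "\<bar>f (x u)\<bar> * \<bar>g (x v) * Hq n t0 s x u v\<bar> \<le> 1 * 1" by (intro mult_mono[OF f(2)]) auto
    then show ?thesis by (simp add: abs_mult)
  qed
  show ?thesis by (rule intb[OF _ bfgH]) (intro borel_measurable_times fm gm Hq_m)
qed

lemma E_WW:
  "(\<integral>x. WW n t0 s x \<partial>Om) =
     (\<integral>b. rho s b * zeta b \<partial>\<nu>) / (\<integral>b. rho s b \<partial>\<nu>) * (1 - (\<integral>b. rho s b * zeta b \<partial>\<nu>) / (\<integral>b. rho s b \<partial>\<nu>))
     * (real (card (PP n t0 s)) * (\<integral>b. rho s b \<partial>\<nu>) - 1 + (1 - (\<integral>b. rho s b \<partial>\<nu>)) ^ card (PP n t0 s))"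
proof -
  interpret p0: prob_space \<nu> by (rule nu)
  let ?P = "PP n t0 s"
  define fa where "fa b = rho s b * zeta b" for b
  define fb where "fb b = rho s b * (1 - zeta b)" for b
  define a where "a = (\<integral>b. fa b \<partial>\<nu>)"
  define g where "g = (\<integral>b. rho s b \<partial>\<nu>)"
  define K where "K = card ?P"
  define KK where "KK = (\<Sum>u\<in>?P. \<Sum>v\<in>?P-{u}. \<integral>x. Hq n t0 s x u v \<partial>Om)"
  have fam: "fa \<in> borel_measurable \<nu>" unfolding fa_def by (intro borel_measurable_times rho_m zeta_m)
  have fbm: "fb \<in> borel_measurable \<nu>" unfolding fb_def by (intro borel_measurable_times borel_measurable_diff rho_m zeta_m borel_measurable_const)
  have fab: "\<bar>fa b\<bar> \<le> 1" for b using rho01[of s b] zeta01[of b] by (auto simp: fa_def)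
  have fbb: "\<bar>fb b\<bar> \<le> 1" for b using rho01[of s b] zeta01[of b] by (auto simp: fb_def)
  have ri: "integrable \<nu> (rho s)" by (rule unit_int[OF rho_m rho_bound])
  have fai: "integrable \<nu> fa" by (rule unit_int[OF fam fab])
  have fbi: "(\<integral>b. fb b \<partial>\<nu>) = g - a"
  proof -
    have "(\<integral>b. fb b \<partial>\<nu>) = (\<integral>b. rho s b - fa b \<partial>\<nu>)" by (simp add: fb_def fa_def algebra_simps)
    also have "\<dots> = g - a" unfolding g_def a_def by (rule Bochner_Integration.integral_diff[OF ri fai])
    finally show ?thesis .
  qed
  have Pn: "u \<in> ?P \<Longrightarrow> u < n" for u by (auto simp: PP_def)
  have pw1: "WW n t0 s x = (\<Sum>u\<in>?P. \<Sum>v\<in>?P-{u}. fa (x u) * (fb (x v) * Hq n t0 s x u v))" for x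
    unfolding p7 fa_def fb_def
    by (intro sum.cong refl div_N_Hq) auto
  have pw2: "NN n t0 s x - 1 + of_bool (NN n t0 s x = 0) = (\<Sum>u\<in>?P. \<Sum>v\<in>?P-{u}. rho s (x u) * (rho s (x v) * Hq n t0 s x u v))" for x
    unfolding p8[symmetric]
    by (intro sum.cong refl div_N_Hq) auto
  have eW: "(\<integral>x. WW n t0 s x \<partial>Om) = a * (g - a) * KK"
  proof -
    have "(\<integral>x. WW n t0 s x \<partial>Om) = (\<integral>x. (\<Sum>u\<in>?P. \<Sum>v\<in>?P-{u}. fa (x u) * (fb (x v) * Hq n t0 s x u v)) \<partial>Om)"
      by (simp add: pw1)
    also have "\<dots> = (\<Sum>u\<in>?P. \<Sum>v\<in>?P-{u}. \<integral>x. fa (x u) * (fb (x v) * Hq n t0 s x u v) \<partial>Om)"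
      by (subst Bochner_Integration.integral_sum,
          auto intro!: Bochner_Integration.integrable_sum pair_int fam fab fbm fbb Pn
            sum.cong Bochner_Integration.integral_sum)
    also have "\<dots> = (\<Sum>u\<in>?P. \<Sum>v\<in>?P-{u}. a * (g - a) * (\<integral>x. Hq n t0 s x u v \<partial>Om))"
      by (intro sum.cong refl) (simp add: E_pair fam fab fbm fbb fbi a_def)
    also have "\<dots> = a * (g - a) * KK" by (simp add: KK_def sum_distrib_left)
    finally show ?thesis .
  qed
  have eN: "real K * g - 1 + (1 - g) ^ K = g * g * KK"
  proof -
    interpret pO: prob_space Om by (rule Om_prob)
    have b0m: "(\<lambda>x. of_bool (NN n t0 s x = 0) :: real) \<in> borel_measurable Om"
    proof -
      have "(\<lambda>x. of_bool (NN n t0 s x = 0) :: real) = (\<lambda>x. \<Prod>u\<in>?P. 1 - rho s (x u))"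
        by (rule ext) (rule p9)
      also have "\<dots> \<in> borel_measurable Om"
        by (intro borel_measurable_prod borel_measurable_diff borel_measurable_const rho_c Pn)
      finally show ?thesis .
    qed
    have b0i: "integrable Om (\<lambda>x. of_bool (NN n t0 s x = 0) :: real)"
      by (rule intb[OF b0m, where B=1]) simp
    have Ni: "integrable Om (\<lambda>x. NN n t0 s x)"
    proof (rule intb[OF NN_m, where B="real n"])
      fix x
      obtain a b where ab: "NN n t0 s x = real a" "a \<le> card ?P" using NS_nat[of n t0 s x] by blast
      have "card ?P \<le> n" using card_mono[OF _ PP_sub, of n t0 s] by simp
      then show "\<bar>NN n t0 s x\<bar> \<le> real n" using ab by simp
    qed
    have "(\<integral>x. NN n t0 s x - 1 + of_bool (NN n t0 s x = 0) \<partial>Om)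
        = (\<integral>x. NN n t0 s x \<partial>Om) - 1 + (\<integral>x. of_bool (NN n t0 s x = 0) \<partial>Om)"
      using Ni b0i by (simp add: Bochner_Integration.integral_add Bochner_Integration.integral_diff pO.prob_space)
    also have "\<dots> = real K * g - 1 + (1 - g) ^ K" by (simp add: E_NN E_N0 K_def g_def)
    finally have l: "(\<integral>x. NN n t0 s x - 1 + of_bool (NN n t0 s x = 0) \<partial>Om) = real K * g - 1 + (1 - g) ^ K" .
    have "(\<integral>x. NN n t0 s x - 1 + of_bool (NN n t0 s x = 0) \<partial>Om)
        = (\<integral>x. (\<Sum>u\<in>?P. \<Sum>v\<in>?P-{u}. rho s (x u) * (rho s (x v) * Hq n t0 s x u v)) \<partial>Om)"
      by (simp add: pw2)
    also have "\<dots> = (\<Sum>u\<in>?P. \<Sum>v\<in>?P-{u}. \<integral>x. rho s (x u) * (rho s (x v) * Hq n t0 s x u v) \<partial>Om)"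
      by (subst Bochner_Integration.integral_sum,
          auto intro!: Bochner_Integration.integrable_sum pair_int rho_m rho_bound Pn
            sum.cong Bochner_Integration.integral_sum)
    also have "\<dots> = (\<Sum>u\<in>?P. \<Sum>v\<in>?P-{u}. g * g * (\<integral>x. Hq n t0 s x u v \<partial>Om))"
      by (intro sum.cong refl) (simp add: E_pair rho_m rho_bound g_def)
    also have "\<dots> = g * g * KK" by (simp add: KK_def sum_distrib_left)
    finally show ?thesis using l by simp
  qed
  have a0: "0 \<le> a" unfolding a_def by (rule Bochner_Integration.integral_nonneg) (simp add: fa_def rho_def zeta_def)
  have ag: "a \<le> g" unfolding a_def g_def
    by (rule Bochner_Integration.integral_mono[OF fai ri]) (simp add: fa_def rho_def zeta_def)
  have main: "(\<integral>x. WW n t0 s x \<partial>Om) = a / g * (1 - a / g) * (real K * g - 1 + (1 - g) ^ K)"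
  proof (cases "g = 0")
    case True
    then have "a = 0" using a0 ag by simp
    then show ?thesis using eW True by simp
  next
    case False
    then have "KK = (real K * g - 1 + (1 - g) ^ K) / (g * g)" using eN by (simp add: field_simps)
    then have "(\<integral>x. WW n t0 s x \<partial>Om) = a * (g - a) * ((real K * g - 1 + (1 - g) ^ K) / (g * g))"
      using eW by simp
    also have "\<dots> = a / g * (1 - a / g) * (real K * g - 1 + (1 - g) ^ K)"
      using False by (simp add: field_simps)
    finally show ?thesis .
  qed
  show ?thesis using main by (simp add: a_def g_def fa_def K_def)
qed


lemma XXXX_int: "integrable Om (\<lambda>x. XX n t0 s x * XX n t0 s' x)"
proof (rule intb[OF borel_measurable_times[OF XX_m XX_m], where B="real n * real n"])
  fix x
  have "\<bar>XX n t0 s x\<bar> * \<bar>XX n t0 s' x\<bar> \<le> real n * real n" by (rule mult_mono[OF XX_bound XX_bound]) auto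
  then show "\<bar>XX n t0 s x * XX n t0 s' x\<bar> \<le> real n * real n" by (simp add: abs_mult)
qed

lemma E_XXXX: "(\<integral>x. XX n t0 s x * XX n t0 s' x \<partial>Om) = (if s = s' then (\<integral>x. VV n t0 s x \<partial>Om) else 0)"
proof (cases "s = s'")
  case True
  then show ?thesis using E_XX2[of s] E_VV[of s] by (simp add: power2_eq_square)
next
  case False
  then consider "s < s'" | "s' < s" by linarith
  then show ?thesis
  proof cases
    case 1 then show ?thesis using E_cross[OF 1] False by simp
  next
    case 2 then show ?thesis using E_cross[OF 2] False by (simp add: mult.commute)
  qed
qed

lemma E_L:
  assumes "finite T"
  shows "(\<integral>x. (\<Sum>s\<in>T. XX n t0 s x) \<partial>Om) = 0"
  by (subst Bochner_Integration.integral_sum) (auto intro: XX_int simp: E_XX0)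

lemma E_L2:
  assumes fin: "finite T"
  shows "(\<integral>x. (\<Sum>s\<in>T. XX n t0 s x)\<^sup>2 \<partial>Om) = (\<Sum>s\<in>T. \<integral>x. VV n t0 s x \<partial>Om)"
proof -
  have "(\<integral>x. (\<Sum>s\<in>T. XX n t0 s x)\<^sup>2 \<partial>Om) = (\<integral>x. (\<Sum>s\<in>T. \<Sum>s'\<in>T. XX n t0 s x * XX n t0 s' x) \<partial>Om)"
    by (simp add: power2_eq_square sum_product)
  also have "\<dots> = (\<Sum>s\<in>T. \<Sum>s'\<in>T. \<integral>x. XX n t0 s x * XX n t0 s' x \<partial>Om)"
    by (subst Bochner_Integration.integral_sum,
        auto intro!: Bochner_Integration.integrable_sum XXXX_int sum.cong Bochner_Integration.integral_sum)
  also have "\<dots> = (\<Sum>s\<in>T. \<Sum>s'\<in>T. if s = s' then (\<integral>x. VV n t0 s x \<partial>Om) else 0)"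
    by (simp add: E_XXXX)
  also have "\<dots> = (\<Sum>s\<in>T. \<integral>x. VV n t0 s x \<partial>Om)"
    using fin by (simp add: sum.delta)
  finally show ?thesis .
qed

lemma VV_int: "integrable Om (\<lambda>x. VV n t0 s x)"
proof -
  have e: "(\<lambda>x. VV n t0 s x) = (\<lambda>x. \<Sum>u\<in>AA n t0 s. \<Sum>v\<in>PP n t0 s - AA n t0 s. rho s (x u) * rho s (x v) * hh n t0 s x)"
    by (rule ext) (rule p5)
  show ?thesis unfolding e
    by (auto intro!: Bochner_Integration.integrable_sum intb[OF _ rrh_bound] rrh_m simp: AA_def PP_def)
qed

lemma E_U:
  assumes "finite T"
  shows "(\<integral>x. (\<Sum>s\<in>T. VV n t0 s x) \<partial>Om) = (\<Sum>s\<in>T. \<integral>x. VV n t0 s x \<partial>Om)"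
  by (rule Bochner_Integration.integral_sum) (rule VV_int)
end

lemma Qsets_space: "sets Q = sets (borel :: (ennreal \<times> ennreal) measure) \<Longrightarrow> space Q = UNIV"
  using sets_eq_imp_space_eq[of Q borel] by simp

lemma Gint1:
  assumes Q: "prob_space Q" and sQ: "sets Q = sets (borel :: (ennreal \<times> ennreal) measure)"
  shows "(\<integral>c. (of_bool (ennreal s \<le> fst c) :: real) \<partial>Q) = Gsurv1 Q s"
proof -
  interpret q: prob_space Q by (rule Q)
  have fm: "fst \<in> borel_measurable Q" by (subst measurable_cong_sets[OF sQ refl]) (rule meas_fst_borel)
  have A: "{c \<in> space Q. ennreal s \<le> fst c} \<in> sets Q" using fm by measurable
  have "(\<integral>c. (of_bool (ennreal s \<le> fst c) :: real) \<partial>Q) = (\<integral>c. indicator {c \<in> space Q. ennreal s \<le> fst c} c \<partial>Q)"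
    by (rule Bochner_Integration.integral_cong[OF refl]) (auto simp: indicator_def)
  also have "\<dots> = measure Q {c \<in> space Q. ennreal s \<le> fst c}"
    unfolding Bochner_Integration.integral_indicator by (rule arg_cong[where f="measure Q"]) auto
  finally show ?thesis by (simp add: Gsurv1_def)
qed

lemma Gint0:
  assumes Q: "prob_space Q" and sQ: "sets Q = sets (borel :: (ennreal \<times> ennreal) measure)"
  shows "(\<integral>c. (of_bool (ennreal s \<le> snd c) :: real) \<partial>Q) = Gsurv0 Q s"
proof -
  interpret q: prob_space Q by (rule Q)
  have fm: "snd \<in> borel_measurable Q" by (subst measurable_cong_sets[OF sQ refl]) (rule meas_snd_borel)
  have A: "{c \<in> space Q. ennreal s \<le> snd c} \<in> sets Q" using fm by measurable
  have "(\<integral>c. (of_bool (ennreal s \<le> snd c) :: real) \<partial>Q) = (\<integral>c. indicator {c \<in> space Q. ennreal s \<le> snd c} c \<partial>Q)"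
    by (rule Bochner_Integration.integral_cong[OF refl]) (auto simp: indicator_def)
  also have "\<dots> = measure Q {c \<in> space Q. ennreal s \<le> snd c}"
    unfolding Bochner_Integration.integral_indicator by (rule arg_cong[where f="measure Q"]) auto
  finally show ?thesis by (simp add: Gsurv0_def)
qed

lemma nu_int:
  fixes f :: "bool \<times> ennreal \<times> ennreal \<Rightarrow> real"
  assumes Q: "prob_space Q" and sQ: "sets Q = sets (borel :: (ennreal \<times> ennreal) measure)"
    and p: "0 \<le> p1" "p1 \<le> 1"
    and fm: "f \<in> borel_measurable (count_space UNIV \<Otimes>\<^sub>M (borel :: (ennreal \<times> ennreal) measure))"
    and fb: "\<And>b. \<bar>f b\<bar> \<le> 1"
  shows "(\<integral>b. f b \<partial>(measure_pmf (bernoulli_pmf p1) \<Otimes>\<^sub>M Q))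
     = p1 * (\<integral>c. f (True, c) \<partial>Q) + (1 - p1) * (\<integral>c. f (False, c) \<partial>Q)"
proof -
  interpret q: prob_space Q by (rule Q)
  interpret b: prob_space "measure_pmf (bernoulli_pmf p1)" by (rule prob_space_measure_pmf)
  interpret pq: pair_prob_space "measure_pmf (bernoulli_pmf p1)" Q by unfold_locales
  have sets_eq: "sets (measure_pmf (bernoulli_pmf p1) \<Otimes>\<^sub>M Q) = sets (count_space UNIV \<Otimes>\<^sub>M (borel :: (ennreal \<times> ennreal) measure))"
    by (intro sets_pair_measure_cong sQ) simp
  have fm': "f \<in> borel_measurable (measure_pmf (bernoulli_pmf p1) \<Otimes>\<^sub>M Q)"
    by (subst measurable_cong_sets[OF sets_eq refl]) (rule fm)
  have fi: "integrable (measure_pmf (bernoulli_pmf p1) \<Otimes>\<^sub>M Q) f"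
    by (rule pq.P.integrable_const_bound[where B=1]) (use fb fm' in auto)
  have "(\<integral>b. f b \<partial>(measure_pmf (bernoulli_pmf p1) \<Otimes>\<^sub>M Q))
      = (\<integral>z. (\<integral>c. f (z, c) \<partial>Q) \<partial>measure_pmf (bernoulli_pmf p1))"
    by (rule pq.integral_fst'[OF fi, symmetric])
  also have "\<dots> = (\<Sum>z\<in>UNIV. pmf (bernoulli_pmf p1) z *\<^sub>R (\<integral>c. f (z, c) \<partial>Q))"
    by (rule integral_measure_pmf) auto
  also have "\<dots> = p1 * (\<integral>c. f (True, c) \<partial>Q) + (1 - p1) * (\<integral>c. f (False, c) \<partial>Q)"
    using p by (simp add: UNIV_bool)
  finally show ?thesis .
qed

lemma nu_rho:
  assumes Q: "prob_space Q" and sQ: "sets Q = sets (borel :: (ennreal \<times> ennreal) measure)"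
    and p: "0 \<le> p1" "p1 \<le> 1"
  shows "(\<integral>b. rho s b \<partial>(measure_pmf (bernoulli_pmf p1) \<Otimes>\<^sub>M Q)) = Gmix p1 Q s"
  using nu_int[OF Q sQ p meas_rho, of s] Gint1[OF Q sQ, of s] Gint0[OF Q sQ, of s]
  by (simp add: rho_def cc_def Gmix_def)

lemma nu_rhozeta:
  assumes Q: "prob_space Q" and sQ: "sets Q = sets (borel :: (ennreal \<times> ennreal) measure)"
    and p: "0 \<le> p1" "p1 \<le> 1"
  shows "(\<integral>b. rho s b * zeta b \<partial>(measure_pmf (bernoulli_pmf p1) \<Otimes>\<^sub>M Q)) = p1 * Gsurv1 Q s"
proof -
  have m: "(\<lambda>b. rho s b * zeta b) \<in> borel_measurable (count_space UNIV \<Otimes>\<^sub>M (borel :: (ennreal \<times> ennreal) measure))"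
    by (intro borel_measurable_times meas_rho meas_zeta)
  have b: "\<bar>rho s b * zeta b\<bar> \<le> 1" for b by (simp add: rho_def zeta_def)
  show ?thesis using nu_int[OF Q sQ p m b] Gint1[OF Q sQ, of s]
    by (simp add: rho_def cc_def zeta_def)
qed


lemma cardsum: "real (card {i \<in> {..<(n::nat)}. Q i}) = (\<Sum>i<n. of_bool (Q i) :: real)"
proof -
  have "(\<Sum>i<n. of_bool (Q i) :: real) = of_nat (card ({..<n} \<inter> {i. Q i}))" by (rule sum_of_bool_eq) simp_all
  moreover have "{..<n} \<inter> {i. Q i} = {i \<in> {..<n}. Q i}" by auto
  ultimately show ?thesis by simp
qed

lemma sum_PP: "(\<Sum>u\<in>PP n t0 s. f u) = (\<Sum>i<n. if s \<le> t0 i then f i else (0::real))"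
  unfolding PP_def by (rule sum.inter_filter) simp
lemma sum_AA: "(\<Sum>u\<in>AA n t0 s. f u) = (\<Sum>i<n. if t0 i = s then f i else (0::real))"
  unfolding AA_def by (rule sum.inter_filter) simp

context
  fixes n :: nat and t1 t0 :: "nat \<Rightarrow> real" and z :: "nat \<Rightarrow> bool" and c1 c0 :: "nat \<Rightarrow> ennreal"
    and x :: "nat \<Rightarrow> bool \<times> ennreal \<times> ennreal" and s :: real
  assumes t0nn: "\<And>i. i < n \<Longrightarrow> 0 \<le> t0 i" and H0: "\<And>i. i < n \<Longrightarrow> t1 i = t0 i"
    and xd: "\<And>i. i < n \<Longrightarrow> x i = (z i, c1 i, c0 i)" and s0: "0 \<le> s"
begin

lemma atrisk_iff: "i < n \<Longrightarrow> (ennreal s \<le> obsW t1 t0 c1 c0 z i) \<longleftrightarrow> (s \<le> t0 i \<and> ennreal s \<le> cc (x i))"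
  using t0nn[of i] H0[of i] xd[of i] by (auto simp: obsW_def realT_def realC_def cc_def)

lemma event_iff: "i < n \<Longrightarrow> (obsDelta t1 t0 c1 c0 z i \<and> obsW t1 t0 c1 c0 z i = ennreal s) \<longleftrightarrow> (t0 i = s \<and> ennreal s \<le> cc (x i))"
  using t0nn[of i] H0[of i] xd[of i] s0
  by (auto simp: obsW_def obsDelta_def realT_def realC_def cc_def min_def)

lemma N1_eq: "N1 n t1 t0 c1 c0 z s = SS n t0 s x"
proof -
  have "N1 n t1 t0 c1 c0 z s = (\<Sum>i<n. of_bool (z i \<and> ennreal s \<le> obsW t1 t0 c1 c0 z i))"
    unfolding N1_def by (rule cardsum)
  also have "\<dots> = (\<Sum>i<n. if s \<le> t0 i then rho s (x i) * zeta (x i) else 0)"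
    by (intro sum.cong refl) (auto simp: atrisk_iff rho_def zeta_def xd)
  finally show ?thesis by (simp add: SS_def sum_PP)
qed

lemma N0_eq: "N0 n t1 t0 c1 c0 z s = NN n t0 s x - SS n t0 s x"
proof -
  have "N0 n t1 t0 c1 c0 z s = (\<Sum>i<n. of_bool (\<not> z i \<and> ennreal s \<le> obsW t1 t0 c1 c0 z i))"
    unfolding N0_def by (rule cardsum)
  also have "\<dots> = (\<Sum>i<n. (if s \<le> t0 i then rho s (x i) else 0) - (if s \<le> t0 i then rho s (x i) * zeta (x i) else 0))"
    by (intro sum.cong refl) (auto simp: atrisk_iff rho_def zeta_def xd)
  finally show ?thesis by (simp add: SS_def NN_def sum_PP sum_subtractf)
qed

lemma Ntot_eq: "Ntot n t1 t0 c1 c0 z s = NN n t0 s x"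
  by (simp add: Ntot_def N1_eq N0_eq)

lemma D1_eq: "D1 n t1 t0 c1 c0 z s = (\<Sum>u\<in>AA n t0 s. rho s (x u) * zeta (x u))"
proof -
  have "D1 n t1 t0 c1 c0 z s = (\<Sum>i<n. of_bool (z i \<and> obsDelta t1 t0 c1 c0 z i \<and> obsW t1 t0 c1 c0 z i = ennreal s))"
    unfolding D1_def by (rule cardsum)
  also have "\<dots> = (\<Sum>i<n. if t0 i = s then rho s (x i) * zeta (x i) else 0)"
    by (intro sum.cong refl) (auto simp: event_iff rho_def zeta_def xd)
  finally show ?thesis by (simp add: sum_AA)
qed

lemma Dtot_eq: "Dtot n t1 t0 c1 c0 z s = DD n t0 s x"
proof -
  have "Dtot n t1 t0 c1 c0 z s = (\<Sum>i<n. of_bool (obsDelta t1 t0 c1 c0 z i \<and> obsW t1 t0 c1 c0 z i = ennreal s))"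
    unfolding Dtot_def by (rule cardsum)
  also have "\<dots> = (\<Sum>i<n. if t0 i = s then rho s (x i) else 0)"
    by (intro sum.cong refl) (auto simp: event_iff rho_def)
  finally show ?thesis by (simp add: DD_def sum_AA)
qed

lemma term_eq: "D1 n t1 t0 c1 c0 z s - Mk n t1 t0 c1 c0 z s = XX n t0 s x"
proof -
  have "XX n t0 s x = (\<Sum>u\<in>AA n t0 s. rho s (x u) * zeta (x u)) - DD n t0 s x * (SS n t0 s x / NN n t0 s x)"
  proof -
    have "(\<Sum>u\<in>AA n t0 s. rho s (x u) * (SS n t0 s x / NN n t0 s x)) = DD n t0 s x * (SS n t0 s x / NN n t0 s x)"
      unfolding DD_def by (rule sum_distrib_right[symmetric])
    then show ?thesis by (simp add: XX_def wt_def right_diff_distrib sum_subtractf)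
  qed
  then show ?thesis by (simp add: Mk_def D1_eq Dtot_eq N1_eq Ntot_eq)
qed

lemma Vk_eq: "Vk n t1 t0 c1 c0 z s = VV n t0 s x"
  by (simp add: Vk_def VV_def Dtot_eq Ntot_eq N1_eq N0_eq Let_def)

end

lemma final_alg:
  fixes K d q g :: real and m :: nat
  assumes K: "K = real m" "1 \<le> K"
  shows "d * (K - d) / (K * (K - 1)) * (q * (1 - q) * (K * g - 1 + (1 - g) ^ m))
       = K\<^sup>2 / (K - 1) * (d / K) * (1 - d / K) * q * (1 - q) * (g - (1 - (1 - g) ^ m) / K)"
proof (cases "K = 1")
  case True then show ?thesis by simp
next
  case False
  then have "K \<noteq> 0" "K - 1 \<noteq> 0" using K by auto
  then show ?thesis by (simp add: field_simps power2_eq_square)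
qed

theorem theorem3:
  fixes M :: "'a measure" and n :: nat and p1 :: real
    and t1 t0 :: "nat \<Rightarrow> real"
    and Z :: "nat \<Rightarrow> 'a \<Rightarrow> bool"
    and C1 C0 :: "nat \<Rightarrow> 'a \<Rightarrow> ennreal"
    and Q :: "(ennreal \<times> ennreal) measure"
  assumes "prob_space M"
    and "0 < p1" and "p1 < 1"
    and "\<And>i. i < n \<Longrightarrow> 0 \<le> t1 i" and "\<And>i. i < n \<Longrightarrow> 0 \<le> t0 i"
    and H0: "\<And>i. i < n \<Longrightarrow> t1 i = t0 i"
    and "prob_space Q" and "sets Q = sets (borel :: (ennreal \<times> ennreal) measure)"
    and measZ: "\<And>i. i < n \<Longrightarrow> Z i \<in> measurable M (count_space UNIV)"
    and measC: "\<And>i. i < n \<Longrightarrow> (\<lambda>\<omega>. (C1 i \<omega>, C0 i \<omega>)) \<in> borel_measurable M"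
    and joint: "distr M (PiM {..<n} (\<lambda>_. count_space UNIV \<Otimes>\<^sub>M (borel :: (ennreal \<times> ennreal) measure)))
                  (\<lambda>\<omega>. \<lambda>i\<in>{..<n}. (Z i \<omega>, (C1 i \<omega>, C0 i \<omega>)))
               = PiM {..<n} (\<lambda>_. measure_pmf (bernoulli_pmf p1) \<Otimes>\<^sub>M Q)"
  shows "prob_space.expectation M (\<lambda>\<omega>. logrankL n t1 t0 (\<lambda>i. C1 i \<omega>) (\<lambda>i. C0 i \<omega>) (\<lambda>i. Z i \<omega>)) = 0
    \<and> prob_space.variance M (\<lambda>\<omega>. logrankL n t1 t0 (\<lambda>i. C1 i \<omega>) (\<lambda>i. C0 i \<omega>) (\<lambda>i. Z i \<omega>))
        = prob_space.expectation M (\<lambda>\<omega>. logrankU n t1 t0 (\<lambda>i. C1 i \<omega>) (\<lambda>i. C0 i \<omega>) (\<lambda>i. Z i \<omega>))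
    \<and> prob_space.expectation M (\<lambda>\<omega>. logrankU n t1 t0 (\<lambda>i. C1 i \<omega>) (\<lambda>i. C0 i \<omega>) (\<lambda>i. Z i \<omega>))
        = (\<Sum>s\<in>times0 n t0. prob_space.expectation M
             (\<lambda>\<omega>. Vk n t1 t0 (\<lambda>i. C1 i \<omega>) (\<lambda>i. C0 i \<omega>) (\<lambda>i. Z i \<omega>) s))
    \<and> (\<Sum>s\<in>times0 n t0. prob_space.expectation M
             (\<lambda>\<omega>. Vk n t1 t0 (\<lambda>i. C1 i \<omega>) (\<lambda>i. C0 i \<omega>) (\<lambda>i. Z i \<omega>) s))
        = (\<Sum>s\<in>times0 n t0.
             (real (nk n t0 s))\<^sup>2 / (real (nk n t0 s) - 1) * hk n t0 s * (1 - hk n t0 s)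
             * phik p1 Q s * (1 - phik p1 Q s)
             * (Gmix p1 Q s - (1 - (1 - Gmix p1 Q s) ^ nk n t0 s) / real (nk n t0 s)))"
proof -
  interpret pM: prob_space M by (rule assms(1))
  note sQ = assms(8)
  define \<nu> where "\<nu> = measure_pmf (bernoulli_pmf p1) \<Otimes>\<^sub>M Q"
  have nu: "prob_space \<nu>" unfolding \<nu>_def
    by (intro prob_space_pair prob_space_measure_pmf assms(7))
  have sets_nu: "sets \<nu> = sets (count_space UNIV \<Otimes>\<^sub>M (borel :: (ennreal \<times> ennreal) measure))"
    unfolding \<nu>_def by (intro sets_pair_measure_cong sQ) simp
  interpret L: lr \<nu> n t0 by (rule lr.intro[OF nu sets_nu])
  define X where "X \<omega> = (\<lambda>i\<in>{..<n}. (Z i \<omega>, (C1 i \<omega>, C0 i \<omega>)))" for \<omega>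
  let ?PC = "PiM {..<n} (\<lambda>_. count_space UNIV \<Otimes>\<^sub>M (borel :: (ennreal \<times> ennreal) measure))"
  have Xm: "X \<in> measurable M ?PC"
    unfolding X_def by (intro measurable_restrict measurable_Pair measZ measC) auto
  have jd: "distr M ?PC X = L.Om" using joint unfolding X_def \<nu>_def by simp
  have sets_Om: "sets L.Om = sets ?PC" by (intro sets_PiM_cong refl sets_nu)
  have transfer: "pM.expectation (\<lambda>\<omega>. F (X \<omega>)) = (\<integral>x. F x \<partial>L.Om)" if F: "F \<in> borel_measurable L.Om" for F :: "_ \<Rightarrow> real"
  proof -
    have F': "F \<in> borel_measurable ?PC" using F by (subst measurable_cong_sets[OF sets_Om[symmetric] refl])
    have "(\<integral>x. F x \<partial>L.Om) = integral\<^sup>L (distr M ?PC X) F" by (simp add: jd)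
    also have "\<dots> = pM.expectation (\<lambda>\<omega>. F (X \<omega>))" by (rule integral_distr[OF Xm F'])
    finally show ?thesis by simp
  qed
  define T where "T = times0 n t0"
  have finT: "finite T" by (simp add: T_def times0_def)
  have T0: "s \<in> T \<Longrightarrow> 0 \<le> s" for s using assms(5) by (auto simp: T_def times0_def)
  have xd: "i < n \<Longrightarrow> X \<omega> i = (Z i \<omega>, C1 i \<omega>, C0 i \<omega>)" for i \<omega> by (simp add: X_def)
  have Leq: "logrankL n t1 t0 (\<lambda>i. C1 i \<omega>) (\<lambda>i. C0 i \<omega>) (\<lambda>i. Z i \<omega>) = (\<Sum>s\<in>T. XX n t0 s (X \<omega>))" for \<omega>
    unfolding logrankL_def T_def[symmetric]
    by (intro sum.cong refl term_eq) (auto simp: assms(5) H0 xd T0)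
  have Ueq: "logrankU n t1 t0 (\<lambda>i. C1 i \<omega>) (\<lambda>i. C0 i \<omega>) (\<lambda>i. Z i \<omega>) = (\<Sum>s\<in>T. VV n t0 s (X \<omega>))" for \<omega>
    unfolding logrankU_def T_def[symmetric]
    by (intro sum.cong refl Vk_eq) (auto simp: assms(5) H0 xd T0)
  have Veq: "s \<in> T \<Longrightarrow> Vk n t1 t0 (\<lambda>i. C1 i \<omega>) (\<lambda>i. C0 i \<omega>) (\<lambda>i. Z i \<omega>) s = VV n t0 s (X \<omega>)" for s \<omega>
    by (rule Vk_eq) (auto simp: assms(5) H0 xd T0)
  have LXm: "(\<lambda>x. \<Sum>s\<in>T. XX n t0 s x) \<in> borel_measurable L.Om"
    by (intro borel_measurable_sum L.XX_m)
  have VVm: "(\<lambda>x. VV n t0 s x) \<in> borel_measurable L.Om" for s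
    by (rule borel_measurable_integrable[OF L.VV_int])
  have UXm: "(\<lambda>x. \<Sum>s\<in>T. VV n t0 s x) \<in> borel_measurable L.Om"
    by (intro borel_measurable_sum VVm)
  have EL: "pM.expectation (\<lambda>\<omega>. logrankL n t1 t0 (\<lambda>i. C1 i \<omega>) (\<lambda>i. C0 i \<omega>) (\<lambda>i. Z i \<omega>)) = 0"
    unfolding Leq by (simp add: transfer[OF LXm] L.E_L[OF finT])
  have VarL: "pM.variance (\<lambda>\<omega>. logrankL n t1 t0 (\<lambda>i. C1 i \<omega>) (\<lambda>i. C0 i \<omega>) (\<lambda>i. Z i \<omega>)) = (\<Sum>s\<in>T. \<integral>x. VV n t0 s x \<partial>L.Om)"
  proof -
    have "pM.variance (\<lambda>\<omega>. logrankL n t1 t0 (\<lambda>i. C1 i \<omega>) (\<lambda>i. C0 i \<omega>) (\<lambda>i. Z i \<omega>))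
        = pM.expectation (\<lambda>\<omega>. (\<lambda>x. (\<Sum>s\<in>T. XX n t0 s x)\<^sup>2) (X \<omega>))"
      using EL by (simp add: Leq)
    also have "\<dots> = (\<integral>x. (\<Sum>s\<in>T. XX n t0 s x)\<^sup>2 \<partial>L.Om)"
      by (rule transfer) (intro borel_measurable_power LXm)
    also have "\<dots> = (\<Sum>s\<in>T. \<integral>x. VV n t0 s x \<partial>L.Om)" by (rule L.E_L2[OF finT])
    finally show ?thesis .
  qed
  have EU: "pM.expectation (\<lambda>\<omega>. logrankU n t1 t0 (\<lambda>i. C1 i \<omega>) (\<lambda>i. C0 i \<omega>) (\<lambda>i. Z i \<omega>)) = (\<Sum>s\<in>T. \<integral>x. VV n t0 s x \<partial>L.Om)"
    unfolding Ueq by (simp add: transfer[OF UXm] L.E_U[OF finT])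
  have EV: "(\<Sum>s\<in>T. pM.expectation (\<lambda>\<omega>. Vk n t1 t0 (\<lambda>i. C1 i \<omega>) (\<lambda>i. C0 i \<omega>) (\<lambda>i. Z i \<omega>) s)) = (\<Sum>s\<in>T. \<integral>x. VV n t0 s x \<partial>L.Om)"
  proof (intro sum.cong refl)
    fix s assume s: "s \<in> T"
    have "pM.expectation (\<lambda>\<omega>. Vk n t1 t0 (\<lambda>i. C1 i \<omega>) (\<lambda>i. C0 i \<omega>) (\<lambda>i. Z i \<omega>) s) = pM.expectation (\<lambda>\<omega>. VV n t0 s (X \<omega>))"
      by (simp add: Veq[OF s])
    also have "\<dots> = (\<integral>x. VV n t0 s x \<partial>L.Om)" by (rule transfer[OF VVm])
    finally show "pM.expectation (\<lambda>\<omega>. Vk n t1 t0 (\<lambda>i. C1 i \<omega>) (\<lambda>i. C0 i \<omega>) (\<lambda>i. Z i \<omega>) s) = (\<integral>x. VV n t0 s x \<partial>L.Om)" .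
  qed
  have p01: "0 \<le> p1" "p1 \<le> 1" using assms(2,3) by auto
  have form: "(\<integral>x. VV n t0 s x \<partial>L.Om) =
             (real (nk n t0 s))\<^sup>2 / (real (nk n t0 s) - 1) * hk n t0 s * (1 - hk n t0 s)
             * phik p1 Q s * (1 - phik p1 Q s)
             * (Gmix p1 Q s - (1 - (1 - Gmix p1 Q s) ^ nk n t0 s) / real (nk n t0 s))" if s: "s \<in> T" for s
  proof -
    have a: "(\<integral>b. rho s b * zeta b \<partial>\<nu>) = p1 * Gsurv1 Q s" unfolding \<nu>_def by (rule nu_rhozeta[OF assms(7) sQ p01])
    have g: "(\<integral>b. rho s b \<partial>\<nu>) = Gmix p1 Q s" unfolding \<nu>_def by (rule nu_rho[OF assms(7) sQ p01])
    have nkP: "nk n t0 s = card (PP n t0 s)" by (simp add: nk_def PP_def)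
    have dkA: "dk n t0 s = real (card (AA n t0 s))" by (simp add: dk_def AA_def)
    obtain j where j: "j < n" "s = t0 j" using s by (auto simp: T_def times0_def)
    have "j \<in> PP n t0 s" using j by (simp add: PP_def)
    then have "0 < card (PP n t0 s)" by (auto simp: card_gt_0_iff)
    then have K1: "1 \<le> real (card (PP n t0 s))" by simp
    have e1: "(\<integral>x. VV n t0 s x \<partial>L.Om) = real (card (AA n t0 s)) * (real (card (PP n t0 s)) - real (card (AA n t0 s)))
      / (real (card (PP n t0 s)) * (real (card (PP n t0 s)) - 1)) *
      (phik p1 Q s * (1 - phik p1 Q s) * (real (card (PP n t0 s)) * Gmix p1 Q s - 1 + (1 - Gmix p1 Q s) ^ card (PP n t0 s)))"
      unfolding L.E_VV L.E_WW a g by (simp add: phik_def)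
    have e2: "real (card (AA n t0 s)) * (real (card (PP n t0 s)) - real (card (AA n t0 s)))
      / (real (card (PP n t0 s)) * (real (card (PP n t0 s)) - 1)) *
      (phik p1 Q s * (1 - phik p1 Q s) * (real (card (PP n t0 s)) * Gmix p1 Q s - 1 + (1 - Gmix p1 Q s) ^ card (PP n t0 s)))
      = (real (card (PP n t0 s)))\<^sup>2 / (real (card (PP n t0 s)) - 1) * (real (card (AA n t0 s)) / real (card (PP n t0 s)))
        * (1 - real (card (AA n t0 s)) / real (card (PP n t0 s))) * phik p1 Q s * (1 - phik p1 Q s)
        * (Gmix p1 Q s - (1 - (1 - Gmix p1 Q s) ^ card (PP n t0 s)) / real (card (PP n t0 s)))"
      by (rule final_alg[OF refl K1])
    show ?thesis unfolding hk_def nkP dkA e1 e2 by (rule refl)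
  qed
  show ?thesis
    using EL VarL EU EV form by (simp add: T_def)
qed

end
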